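(* Let $G=(V,E)$ be an almost tree (2). Then the diameter of the 1-skeleton of $\mathrm{CUT}(G)$ satisfies $$\left\lfloor \frac{|V|}{3}\right\rfloor \le d(\mathrm{CUT}(G)) \le |V|-1.$$
   Context: For an undirected graph $G=(V,E)$ and $S\subseteq V$, $\delta(S)\subseteq E$ denotes the set of edges with exactly one endpoint in $S$, and $\mathbf v(S)\in\{0,1\}^{E}$ is its incidence vector ($v(S)_e=1$ iff $e\in\delta(S)$). The cut polytope is $\mathrm{CUT}(G)=\operatorname{conv}\{\mathbf v(S):S\subseteq V\}\subset\mathbb R^{E}$. The 1-skeleton of a polytope is the graph whose vertices are the polytope's vertices and whose edges are its one-dimensional faces; $d(\cdot)$ denotes its diameter. A connected graph is an almost tree ($k$) if every biconnected component (maximal subgraph that remains connected after removal of any single vertex) has at most $k$ edges not belonging to a spanning tree of that component. *)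

theory Defs
  imports "HOL-Analysis.Analysis"
begin

definition simple_graph :: "'v set \<Rightarrow> 'v set set \<Rightarrow> bool" where
  "simple_graph V E \<longleftrightarrow> finite V \<and> (\<forall>e\<in>E. \<exists>x y. x \<noteq> y \<and> x \<in> V \<and> y \<in> V \<and> e = {x, y})"

definition connected_on :: "'v set \<Rightarrow> 'v set set \<Rightarrow> bool" where
  "connected_on W F \<longleftrightarrow> (\<forall>x\<in>W. \<forall>y\<in>W. (\<lambda>a b. {a, b} \<in> F)\<^sup>*\<^sup>* x y)"

definition connected_graph :: "'v set \<Rightarrow> 'v set set \<Rightarrow> bool" where
  "connected_graph V E \<longleftrightarrow> simple_graph V E \<and> V \<noteq> {} \<and> connected_on V E"

definition subgraph_of :: "'v set \<Rightarrow> 'v set set \<Rightarrow> 'v set \<Rightarrow> 'v set set \<Rightarrow> bool" where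
  "subgraph_of W F V E \<longleftrightarrow> W \<subseteq> V \<and> F \<subseteq> E \<and> (\<forall>e\<in>F. e \<subseteq> W)"

definition biconnected_sub :: "'v set \<Rightarrow> 'v set set \<Rightarrow> 'v set \<Rightarrow> 'v set set \<Rightarrow> bool" where
  "biconnected_sub V E W F \<longleftrightarrow> subgraph_of W F V E \<and> connected_on W F \<and>
     (\<forall>w\<in>W. connected_on (W - {w}) {e\<in>F. w \<notin> e})"

definition biconnected_component :: "'v set \<Rightarrow> 'v set set \<Rightarrow> 'v set \<Rightarrow> 'v set set \<Rightarrow> bool" where
  "biconnected_component V E W F \<longleftrightarrow> biconnected_sub V E W F \<and>
     (\<forall>W' F'. biconnected_sub V E W' F' \<and> W \<subseteq> W' \<and> F \<subseteq> F' \<longrightarrow> W' = W \<and> F' = F)"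

definition spanning_tree :: "'v set \<Rightarrow> 'v set set \<Rightarrow> 'v set set \<Rightarrow> bool" where
  "spanning_tree W F T \<longleftrightarrow> T \<subseteq> F \<and> connected_on W T \<and> (\<forall>e\<in>T. \<not> connected_on W (T - {e}))"

definition almost_tree :: "nat \<Rightarrow> 'v set \<Rightarrow> 'v set set \<Rightarrow> bool" where
  "almost_tree k V E \<longleftrightarrow> connected_graph V E \<and>
     (\<forall>W F. biconnected_component V E W F \<longrightarrow> (\<exists>T. spanning_tree W F T \<and> card (F - T) \<le> k))"

text \<open>R^E is embedded in real^('v set) (coordinates outside E are 0).\<close>
definition cut_vec :: "'v set set \<Rightarrow> 'v set \<Rightarrow> real ^ ('v::finite set)" where
  "cut_vec E S = (\<chi> e. if e \<in> E \<and> card (e \<inter> S) = 1 then 1 else 0)"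

definition cut_polytope :: "'v set \<Rightarrow> 'v set set \<Rightarrow> (real ^ ('v::finite set)) set" where
  "cut_polytope V E = convex hull {cut_vec E S | S. S \<subseteq> V}"

definition skel_vertices :: "'a::euclidean_space set \<Rightarrow> 'a set" where
  "skel_vertices P = {x. x extreme_point_of P}"

definition skel_adj :: "'a::euclidean_space set \<Rightarrow> 'a \<Rightarrow> 'a \<Rightarrow> bool" where
  "skel_adj P x y \<longleftrightarrow> x \<noteq> y \<and>
     (\<exists>F. F face_of P \<and> aff_dim F = 1 \<and> x extreme_point_of F \<and> y extreme_point_of F)"

definition skel_dist :: "'a::euclidean_space set \<Rightarrow> 'a \<Rightarrow> 'a \<Rightarrow> nat" where
  "skel_dist P x y = (LEAST n. (skel_adj P ^^ n) x y)"

definition skel_diameter :: "'a::euclidean_space set \<Rightarrow> nat" where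
  "skel_diameter P = Max {skel_dist P x y | x y. x \<in> skel_vertices P \<and> y \<in> skel_vertices P}"

end

theory Submission
  imports Defs
begin

abbreviation rel :: "'v set set \<Rightarrow> 'v \<Rightarrow> 'v \<Rightarrow> bool" where
  "rel F \<equiv> (\<lambda>a b. {a, b} \<in> F)"

lemma rel_sym: "rel F a b \<Longrightarrow> rel F b a"
  by (simp add: insert_commute)

lemma reach_sym: "(rel F)\<^sup>*\<^sup>* a b \<Longrightarrow> (rel F)\<^sup>*\<^sup>* b a"
proof (induction rule: rtranclp_induct)
  case base then show ?case by simp
next
  case (step y z)
  then show ?case by (meson converse_rtranclp_into_rtranclp rel_sym)
qed

lemma reach_mono: "(rel F)\<^sup>*\<^sup>* a b \<Longrightarrow> F \<subseteq> F' \<Longrightarrow> (rel F')\<^sup>*\<^sup>* a b"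
  by (induction rule: rtranclp_induct) (auto intro: rtranclp.rtrancl_into_rtrancl)

lemma reach_edge: "{a,b} \<in> F \<Longrightarrow> (rel F)\<^sup>*\<^sup>* a b"
  by auto

fun walk :: "'v set set \<Rightarrow> 'v list \<Rightarrow> bool" where
  "walk F [] = False"
| "walk F [x] = True"
| "walk F (x # y # ys) = ({x, y} \<in> F \<and> walk F (y # ys))"

fun eds :: "'v list \<Rightarrow> 'v set set" where
  "eds [] = {}"
| "eds [x] = {}"
| "eds (x # y # ys) = insert {x, y} (eds (y # ys))"

lemma walk_eds: "walk F xs \<Longrightarrow> eds xs \<subseteq> F"
  by (induction xs rule: eds.induct) auto

lemma walk_mono: "walk F xs \<Longrightarrow> F \<subseteq> F' \<Longrightarrow> walk F' xs"
  by (induction xs rule: eds.induct) auto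

lemma walk_eds_self: "xs \<noteq> [] \<Longrightarrow> walk (eds xs) xs"
proof (induction xs rule: eds.induct)
  case (3 x y ys)
  have "walk (eds (y # ys)) (y # ys)" using 3 by simp
  then have "walk (eds (x # y # ys)) (y # ys)" by (rule walk_mono) auto
  then show ?case by simp
qed auto

lemma eds_sub: "e \<in> eds xs \<Longrightarrow> e \<subseteq> set xs"
  by (induction xs rule: eds.induct) auto

lemma walk_ne: "walk F xs \<Longrightarrow> xs \<noteq> []"
  by auto

lemma walk_Cons: "walk F (x # ys) \<Longrightarrow> ys \<noteq> [] \<Longrightarrow> walk F ys \<and> {x, hd ys} \<in> F"
  by (cases ys) auto

lemma walk_append: "xs \<noteq> [] \<Longrightarrow> ys \<noteq> [] \<Longrightarrow>
   walk F (xs @ ys) \<longleftrightarrow> walk F xs \<and> walk F ys \<and> {last xs, hd ys} \<in> F"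
proof (induction xs rule: eds.induct)
  case (2 x)
  then show ?case by (cases ys) auto
next
  case (3 x y zs)
  then show ?case by simp
qed auto

lemma eds_append: "xs \<noteq> [] \<Longrightarrow> ys \<noteq> [] \<Longrightarrow>
   eds (xs @ ys) = eds xs \<union> eds ys \<union> {{last xs, hd ys}}"
proof (induction xs rule: eds.induct)
  case (2 x)
  then show ?case by (cases ys) auto
next
  case (3 x y zs)
  then show ?case by auto
qed auto

lemma walk_suffix: "walk F (xs @ ys) \<Longrightarrow> ys \<noteq> [] \<Longrightarrow> walk F ys"
  by (cases "xs = []") (auto simp: walk_append)

lemma reach_hd: "walk F xs \<Longrightarrow> v \<in> set xs \<Longrightarrow> (rel (eds xs))\<^sup>*\<^sup>* v (hd xs)"
proof (induction xs rule: eds.induct)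
  case (3 x y ys)
  show ?case
  proof (cases "v = x")
    case True then show ?thesis by simp
  next
    case False
    then have "v \<in> set (y # ys)" using 3 by auto
    then have "(rel (eds (y # ys)))\<^sup>*\<^sup>* v y" using 3 by auto
    then have a: "(rel (eds (x # y # ys)))\<^sup>*\<^sup>* v y" by (rule reach_mono) auto
    have "rel (eds (x # y # ys)) y x" by (simp add: insert_commute)
    from rtranclp.rtrancl_into_rtrancl[OF a this] show ?thesis by simp
  qed
qed auto

lemma reach_last: "walk F xs \<Longrightarrow> v \<in> set xs \<Longrightarrow> (rel (eds xs))\<^sup>*\<^sup>* v (last xs)"
proof (induction xs arbitrary: v rule: eds.induct)
  case (3 x y ys)
  have w: "walk F (y # ys)" using 3(2) by simp
  have r: "(rel (eds (y # ys)))\<^sup>*\<^sup>* y (last (y # ys))" using 3(1)[OF w] by simp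
  show ?case
  proof (cases "v = x")
    case True
    have "(rel (eds (x # y # ys)))\<^sup>*\<^sup>* y (last (y # ys))" using r by (rule reach_mono) auto
    moreover have "rel (eds (x # y # ys)) x y" by simp
    ultimately have "(rel (eds (x # y # ys)))\<^sup>*\<^sup>* x (last (y # ys))"
      by (rule converse_rtranclp_into_rtranclp[rotated])
    then show ?thesis using True by simp
  next
    case False
    then have "v \<in> set (y # ys)" using 3 by auto
    then have "(rel (eds (y # ys)))\<^sup>*\<^sup>* v (last (y # ys))" using 3(1)[OF w] by simp
    then have "(rel (eds (x # y # ys)))\<^sup>*\<^sup>* v (last (y # ys))" by (rule reach_mono) auto
    then show ?thesis by simp
  qed
qed auto

lemma reach_avoid_imp: "(rel F)\<^sup>*\<^sup>* v w \<Longrightarrow> \<forall>e\<in>F. w \<notin> e \<Longrightarrow> v = w"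
  by (induction rule: rtranclp_induct) auto

lemma reach_avoid:
  assumes "walk F xs" "distinct xs" "w \<in> set xs" "v \<in> set xs" "v \<noteq> w"
  shows "(rel {e \<in> eds xs. w \<notin> e})\<^sup>*\<^sup>* v (hd xs) \<or> (rel {e \<in> eds xs. w \<notin> e})\<^sup>*\<^sup>* v (last xs)"
  using assms
proof (induction xs rule: eds.induct)
  case (3 x y ys)
  show ?case
  proof (cases "w = x")
    case True
    then have v: "v \<in> set (y # ys)" using 3 by auto
    have "(rel (eds (y # ys)))\<^sup>*\<^sup>* v (last (y # ys))" using 3 v by (intro reach_last) auto
    moreover have "eds (y # ys) \<subseteq> {e \<in> eds (x # y # ys). w \<notin> e}"
      using 3(3) True eds_sub[of _ "y # ys"] by auto
    ultimately show ?thesis by (auto dest: reach_mono)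
  next
    case False
    show ?thesis
    proof (cases "v = x")
      case True then show ?thesis by simp
    next
      case vx: False
      then have vw: "v \<in> set (y # ys)" "w \<in> set (y # ys)" using 3 False by auto
      have sub: "{e \<in> eds (y # ys). w \<notin> e} \<subseteq> {e \<in> eds (x # y # ys). w \<notin> e}" by auto
      from 3(1)[OF _ _ vw(2) vw(1) 3(6)] 3(2,3)
      consider "(rel {e \<in> eds (y # ys). w \<notin> e})\<^sup>*\<^sup>* v y"
        | "(rel {e \<in> eds (y # ys). w \<notin> e})\<^sup>*\<^sup>* v (last (y # ys))" by auto
      then show ?thesis
      proof cases
        case 1
        show ?thesis
        proof (cases "w = y")
          case True
          have "(rel {e \<in> eds (y # ys). w \<notin> e})\<^sup>*\<^sup>* v w" using 1 True by simp
          then have "v = w" by (rule reach_avoid_imp) auto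
          then show ?thesis using 3(6) by simp
        next
          case wy: False
          have a: "(rel {e \<in> eds (x # y # ys). w \<notin> e})\<^sup>*\<^sup>* v y" using 1 sub by (rule reach_mono)
          have "rel {e \<in> eds (x # y # ys). w \<notin> e} y x" using wy False by (auto simp: insert_commute)
          from rtranclp.rtrancl_into_rtrancl[OF a this] show ?thesis by simp
        qed
      next
        case 2
        have "(rel {e \<in> eds (x # y # ys). w \<notin> e})\<^sup>*\<^sup>* v (last (y # ys))"
          using 2 sub by (rule reach_mono)
        then show ?thesis by simp
      qed
    qed
  qed
qed auto

lemma walk_Cons_intro: "walk F ys \<Longrightarrow> {x, hd ys} \<in> F \<Longrightarrow> walk F (x # ys)"
  by (cases ys) auto

lemma reach_walk: "(rel F)\<^sup>*\<^sup>* x y \<Longrightarrow> \<exists>xs. walk F xs \<and> distinct xs \<and> hd xs = x \<and> last xs = y"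
proof (induction rule: converse_rtranclp_induct)
  case base
  then show ?case by (intro exI[of _ "[y]"]) auto
next
  case (step x z)
  then obtain ys where ys: "walk F ys" "distinct ys" "hd ys = z" "last ys = y" by auto
  have ne: "ys \<noteq> []" using ys(1) by auto
  show ?case
  proof (cases "x \<in> set ys")
    case False
    then show ?thesis using ys ne step(1)
      by (intro exI[of _ "x # ys"]) (auto intro: walk_Cons_intro)
  next
    case True
    then obtain as bs where sp: "ys = as @ x # bs" by (meson split_list)
    have "walk F (x # bs)" using ys(1) sp walk_suffix by blast
    moreover have "distinct (x # bs)" using ys(2) sp by auto
    moreover have "last (x # bs) = y" using ys(4) sp by simp
    ultimately show ?thesis by (intro exI[of _ "x # bs"]) auto
  qed
qed

lemma walk_set: "walk F xs \<Longrightarrow> \<forall>e\<in>F. e \<subseteq> U \<Longrightarrow> hd xs \<in> U \<Longrightarrow> set xs \<subseteq> U"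
proof (induction xs rule: eds.induct)
  case (3 x y ys)
  then have "{x, y} \<subseteq> U" by auto
  then have "y \<in> U" by simp
  then have "set (y # ys) \<subseteq> U" using 3 by simp
  then show ?case using 3 by simp
qed auto

lemma hd_in: "walk F xs \<Longrightarrow> hd xs \<in> set xs" by (cases xs) auto
lemma last_in: "walk F xs \<Longrightarrow> last xs \<in> set xs" by (cases xs) auto

lemma path_part:
  assumes "walk F P" "distinct P" "v \<in> set P" "v \<noteq> w" "{e \<in> eds P. w \<notin> e} \<subseteq> F'"
  shows "\<exists>z\<in>{hd P, last P} - {w}. (rel F')\<^sup>*\<^sup>* v z"
proof (cases "w \<in> set P")
  case True
  from reach_avoid[OF assms(1,2) True assms(3,4)]
  obtain z where z: "z \<in> {hd P, last P}" "(rel {e \<in> eds P. w \<notin> e})\<^sup>*\<^sup>* v z" by auto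
  have "z \<noteq> w"
  proof
    assume "z = w"
    then have "v = w" using reach_avoid_imp[OF z(2)[unfolded \<open>z = w\<close>]] by auto
    then show False using assms(4) by simp
  qed
  moreover have "(rel F')\<^sup>*\<^sup>* v z" using z(2) assms(5) by (rule reach_mono)
  ultimately show ?thesis using z(1) by blast
next
  case False
  have "(rel (eds P))\<^sup>*\<^sup>* v (hd P)" using reach_hd[OF assms(1,3)] .
  moreover have "eds P \<subseteq> F'" using assms(5) False eds_sub by fastforce
  ultimately have "(rel F')\<^sup>*\<^sup>* v (hd P)" by (rule reach_mono)
  moreover have "hd P \<noteq> w" using False hd_in[OF assms(1)] by auto
  ultimately show ?thesis by blast
qed

lemma path_ab:
  assumes "walk F P" "w \<notin> set P" "{e \<in> eds P. w \<notin> e} \<subseteq> F'"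
  shows "(rel F')\<^sup>*\<^sup>* (hd P) (last P)"
proof -
  have "(rel (eds P))\<^sup>*\<^sup>* (hd P) (last P)" using reach_last[OF assms(1) hd_in[OF assms(1)]] .
  moreover have "eds P \<subseteq> F'" using assms(3,2) eds_sub by fastforce
  ultimately show ?thesis by (rule reach_mono)
qed

lemma conn_from_root:
  assumes "\<forall>v\<in>W. (rel F)\<^sup>*\<^sup>* v r"
  shows "connected_on W F"
  unfolding connected_on_def
proof (intro ballI)
  fix x y assume "x \<in> W" "y \<in> W"
  then have a: "(rel F)\<^sup>*\<^sup>* x r" and b: "(rel F)\<^sup>*\<^sup>* y r" using assms by auto
  show "(rel F)\<^sup>*\<^sup>* x y" using rtranclp_trans[OF a reach_sym[OF b]] .
qed

lemma theta_bicon: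
  assumes w1: "walk E P1" and w2: "walk E P2" and d1: "distinct P1" and d2: "distinct P2"
    and h1: "hd P1 = a" and h2: "hd P2 = a" and l1: "last P1 = b" and l2: "last P2 = b"
    and int: "set P1 \<inter> set P2 = {a, b}" and sub: "set P1 \<union> set P2 \<subseteq> V"
  shows "biconnected_sub V E (set P1 \<union> set P2) (eds P1 \<union> eds P2)"
proof -
  let ?W = "set P1 \<union> set P2" and ?F = "eds P1 \<union> eds P2"
  have sg: "subgraph_of ?W ?F V E"
    unfolding subgraph_of_def using sub walk_eds[OF w1] walk_eds[OF w2] eds_sub by blast
  have "\<forall>v\<in>?W. (rel ?F)\<^sup>*\<^sup>* v a"
  proof
    fix v assume "v \<in> ?W"
    then show "(rel ?F)\<^sup>*\<^sup>* v a"
    proof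
      assume "v \<in> set P1"
      from reach_hd[OF w1 this] have "(rel (eds P1))\<^sup>*\<^sup>* v a" using h1 by simp
      then show ?thesis by (rule reach_mono) simp
    next
      assume "v \<in> set P2"
      from reach_hd[OF w2 this] have "(rel (eds P2))\<^sup>*\<^sup>* v a" using h2 by simp
      then show ?thesis by (rule reach_mono) simp
    qed
  qed
  then have c: "connected_on ?W ?F" by (rule conn_from_root)
  have rm: "connected_on (?W - {w}) {e \<in> ?F. w \<notin> e}" if "w \<in> ?W" for w
  proof -
    let ?F' = "{e \<in> ?F. w \<notin> e}"
    have C: "\<exists>z\<in>{a, b} - {w}. (rel ?F')\<^sup>*\<^sup>* v z" if "v \<in> ?W - {w}" for v
    proof -
      from that have "v \<in> set P1 \<or> v \<in> set P2" "v \<noteq> w" by auto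
      then show ?thesis
      proof (elim disjE)
        assume "v \<in> set P1"
        from path_part[OF w1 d1 this \<open>v \<noteq> w\<close>, of ?F'] show ?thesis using h1 l1 by auto
      next
        assume "v \<in> set P2"
        from path_part[OF w2 d2 this \<open>v \<noteq> w\<close>, of ?F'] show ?thesis using h2 l2 by auto
      qed
    qed
    have D: "(rel ?F')\<^sup>*\<^sup>* a b" if "a \<noteq> w" "b \<noteq> w"
    proof -
      have "w \<notin> set P1 \<or> w \<notin> set P2" using int that by auto
      then show ?thesis
      proof
        assume "w \<notin> set P1"
        from path_ab[OF w1 this, of ?F'] show ?thesis using h1 l1 by auto
      next
        assume "w \<notin> set P2"
        from path_ab[OF w2 this, of ?F'] show ?thesis using h2 l2 by auto
      qed
    qed
    show ?thesis unfolding connected_on_def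
    proof (intro ballI)
      fix x y assume x: "x \<in> ?W - {w}" and y: "y \<in> ?W - {w}"
      obtain zx where zx: "zx \<in> {a, b} - {w}" "(rel ?F')\<^sup>*\<^sup>* x zx" using C[OF x] by auto
      obtain zy where zy: "zy \<in> {a, b} - {w}" "(rel ?F')\<^sup>*\<^sup>* y zy" using C[OF y] by auto
      have "(rel ?F')\<^sup>*\<^sup>* zx zy"
      proof (cases "zx = zy")
        case True then show ?thesis by simp
      next
        case False
        then have "a \<noteq> w" "b \<noteq> w" using zx zy by auto
        then have ab: "(rel ?F')\<^sup>*\<^sup>* a b" by (rule D)
        have "zx = a \<and> zy = b \<or> zx = b \<and> zy = a" using zx(1) zy(1) False by auto
        then show ?thesis using ab reach_sym[OF ab] by auto
      qed
      from rtranclp_trans[OF zx(2) this] have "(rel ?F')\<^sup>*\<^sup>* x zy" .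
      from rtranclp_trans[OF this reach_sym[OF zy(2)]] show "(rel ?F')\<^sup>*\<^sup>* x y" .
    qed
  qed
  show ?thesis unfolding biconnected_sub_def by (intro conjI sg c ballI rm)
qed

lemma union_bicon:
  assumes b1: "biconnected_sub V E W1 F1" and b2: "biconnected_sub V E W2 F2"
    and xy: "x \<in> W1" "x \<in> W2" "y \<in> W1" "y \<in> W2" "x \<noteq> y"
  shows "biconnected_sub V E (W1 \<union> W2) (F1 \<union> F2)"
proof -
  have s1: "subgraph_of W1 F1 V E" "connected_on W1 F1" "\<forall>w\<in>W1. connected_on (W1 - {w}) {e\<in>F1. w \<notin> e}"
    using b1 unfolding biconnected_sub_def by auto
  have s2: "subgraph_of W2 F2 V E" "connected_on W2 F2" "\<forall>w\<in>W2. connected_on (W2 - {w}) {e\<in>F2. w \<notin> e}"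
    using b2 unfolding biconnected_sub_def by auto
  have sg: "subgraph_of (W1 \<union> W2) (F1 \<union> F2) V E" using s1(1) s2(1) unfolding subgraph_of_def by auto
  have "\<forall>v\<in>W1 \<union> W2. (rel (F1 \<union> F2))\<^sup>*\<^sup>* v x"
  proof
    fix v assume "v \<in> W1 \<union> W2"
    then show "(rel (F1 \<union> F2))\<^sup>*\<^sup>* v x"
    proof
      assume "v \<in> W1"
      then have "(rel F1)\<^sup>*\<^sup>* v x" using s1(2) xy unfolding connected_on_def by auto
      then show ?thesis by (rule reach_mono) auto
    next
      assume "v \<in> W2"
      then have "(rel F2)\<^sup>*\<^sup>* v x" using s2(2) xy unfolding connected_on_def by auto
      then show ?thesis by (rule reach_mono) auto
    qed
  qed
  then have c: "connected_on (W1 \<union> W2) (F1 \<union> F2)" by (rule conn_from_root)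
  have rm: "connected_on ((W1 \<union> W2) - {w}) {e \<in> F1 \<union> F2. w \<notin> e}" if "w \<in> W1 \<union> W2" for w
  proof -
    obtain z where z: "z \<in> {x, y}" "z \<noteq> w" using xy(5) by auto
    have "\<forall>v\<in>(W1 \<union> W2) - {w}. (rel {e \<in> F1 \<union> F2. w \<notin> e})\<^sup>*\<^sup>* v z"
    proof
      fix v assume v: "v \<in> (W1 \<union> W2) - {w}"
      show "(rel {e \<in> F1 \<union> F2. w \<notin> e})\<^sup>*\<^sup>* v z"
      proof (cases "v \<in> W1")
        case True
        have "connected_on (W1 - {w}) {e\<in>F1. w \<notin> e}"
        proof (cases "w \<in> W1")
          case True then show ?thesis using s1(3) by auto
        next
          case False
          then have "W1 - {w} = W1" "{e\<in>F1. w \<notin> e} = F1"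
            using s1(1) unfolding subgraph_of_def by auto
          then show ?thesis using s1(2) by simp
        qed
        moreover have "v \<in> W1 - {w}" "z \<in> W1 - {w}" using True v z xy by auto
        ultimately have "(rel {e\<in>F1. w \<notin> e})\<^sup>*\<^sup>* v z"
          unfolding connected_on_def by blast
        then show ?thesis by (rule reach_mono) blast
      next
        case False
        then have v2: "v \<in> W2" using v by auto
        have "connected_on (W2 - {w}) {e\<in>F2. w \<notin> e}"
        proof (cases "w \<in> W2")
          case True then show ?thesis using s2(3) by auto
        next
          case False
          then have "W2 - {w} = W2" "{e\<in>F2. w \<notin> e} = F2"
            using s2(1) unfolding subgraph_of_def by auto
          then show ?thesis using s2(2) by simp
        qed
        moreover have "v \<in> W2 - {w}" "z \<in> W2 - {w}" using v2 v z xy by auto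
        ultimately have "(rel {e\<in>F2. w \<notin> e})\<^sup>*\<^sup>* v z"
          unfolding connected_on_def by blast
        then show ?thesis by (rule reach_mono) blast
      qed
    qed
    then show ?thesis by (rule conn_from_root)
  qed
  show ?thesis unfolding biconnected_sub_def by (intro conjI sg c ballI rm)
qed

lemma parent_ex:
  assumes fin: "finite W" and RW: "R \<subseteq> W" and reach: "\<forall>v\<in>W. \<exists>r\<in>R. (rel F)\<^sup>*\<^sup>* v r"
    and FW: "\<forall>e\<in>F. e \<subseteq> W"
  shows "\<exists>d p. (\<forall>v\<in>R. d v = (0::nat)) \<and> (\<forall>v\<in>W-R. {v, p v} \<in> F \<and> p v \<in> W \<and> d (p v) + 1 = d v)"
proof -
  define d where "d v = (LEAST n. \<exists>r\<in>R. (rel F ^^ n) v r)" for v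
  have ex: "\<exists>n. \<exists>r\<in>R. (rel F ^^ n) v r" if "v \<in> W" for v
    using reach that by (metis rtranclp_power)
  have dI: "\<exists>r\<in>R. (rel F ^^ d v) v r" if "v \<in> W" for v
    unfolding d_def using ex[OF that] by (rule LeastI_ex)
  have dle: "d v \<le> n" if "r \<in> R" "(rel F ^^ n) v r" for v n r
    unfolding d_def using that by (intro Least_le) blast
  have d0: "d v = 0" if "v \<in> R" for v
    using dle[OF that, of 0] by simp
  have step: "\<exists>u. {v, u} \<in> F \<and> u \<in> W \<and> d u + 1 = d v" if v: "v \<in> W - R" for v
  proof -
    obtain r where r: "r \<in> R" "(rel F ^^ d v) v r" using dI v by auto
    have "d v \<noteq> 0"
    proof
      assume "d v = 0"
      then have "v = r" using r(2) by simp
      then show False using v r(1) by simp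
    qed
    then obtain m where m: "d v = Suc m" by (cases "d v") auto
    from r(2) m have "(rel F ^^ Suc m) v r" by simp
    from relpowp_Suc_D2[OF this] obtain u where u: "rel F v u" "(rel F ^^ m) u r" by blast
    have "{v, u} \<subseteq> W" using u(1) FW by blast
    then have uW: "u \<in> W" by simp
    have le1: "d u \<le> m" using dle[OF r(1) u(2)] .
    obtain r' where r': "r' \<in> R" "(rel F ^^ d u) u r'" using dI uW by auto
    have "(rel F ^^ Suc (d u)) v r'" using relpowp_Suc_I2[OF u(1) r'(2)] .
    then have "d v \<le> Suc (d u)" using dle[OF r'(1)] by blast
    then have "d u + 1 = d v" using m le1 by simp
    then show ?thesis using u(1) uW by blast
  qed
  define p where "p v = (SOME u. {v, u} \<in> F \<and> u \<in> W \<and> d u + 1 = d v)" for v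
  have "\<forall>v\<in>W-R. {v, p v} \<in> F \<and> p v \<in> W \<and> d (p v) + 1 = d v"
  proof
    fix v assume "v \<in> W - R"
    from someI_ex[OF step[OF this]] show "{v, p v} \<in> F \<and> p v \<in> W \<and> d (p v) + 1 = d v"
      unfolding p_def .
  qed
  then show ?thesis using d0 by blast
qed

lemma parent_inj:
  assumes "\<forall>v\<in>R. d v = (0::nat)" "\<forall>v\<in>W-R. d (p v) + 1 = d v"
  shows "inj_on (\<lambda>v. {v, p v}) (W - R)"
proof (rule inj_onI)
  fix v v' assume v: "v \<in> W - R" and v': "v' \<in> W - R" and eq: "{v, p v} = {v', p v'}"
  show "v = v'"
  proof (rule ccontr)
    assume "v \<noteq> v'"
    then have e: "v = p v'" "v' = p v" using eq by (auto simp: doubleton_eq_iff)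
    have a: "d (p v') + 1 = d v'" and b: "d (p v) + 1 = d v" using assms(2) v v' by auto
    have "d v + 1 = d v'" using a e(1) by simp
    moreover have "d v' + 1 = d v" using b e(2) by simp
    ultimately show False by linarith
  qed
qed

lemma parent_reach:
  assumes d0: "\<forall>v\<in>R. d v = (0::nat)" and dp: "\<forall>v\<in>W-R. {v, p v} \<in> F \<and> p v \<in> W \<and> d (p v) + 1 = d v"
  shows "\<forall>v\<in>W. \<exists>r\<in>R. (rel ((\<lambda>v. {v, p v}) ` (W - R)))\<^sup>*\<^sup>* v r"
proof -
  let ?P = "(\<lambda>v. {v, p v}) ` (W - R)"
  have "\<forall>v\<in>W. d v = n \<longrightarrow> (\<exists>r\<in>R. (rel ?P)\<^sup>*\<^sup>* v r)" for n
  proof (induction n)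
    case 0
    show ?case
    proof (intro ballI impI)
      fix v assume "v \<in> W" "d v = 0"
      then have "v \<in> R" using dp by force
      then show "\<exists>r\<in>R. (rel ?P)\<^sup>*\<^sup>* v r" by blast
    qed
  next
    case (Suc n)
    show ?case
    proof (intro ballI impI)
      fix v assume v: "v \<in> W" "d v = Suc n"
      then have vR: "v \<in> W - R" using d0 by force
      then have "p v \<in> W" "d (p v) + 1 = d v" using dp by auto
      then have "p v \<in> W" "d (p v) = n" using v(2) by auto
      then obtain r where r: "r \<in> R" "(rel ?P)\<^sup>*\<^sup>* (p v) r" using Suc by blast
      have "rel ?P v (p v)" using vR by blast
      then have "(rel ?P)\<^sup>*\<^sup>* v r" using r(2) by (rule converse_rtranclp_into_rtranclp)
      then show "\<exists>r\<in>R. (rel ?P)\<^sup>*\<^sup>* v r" using r(1) by blast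
    qed
  qed
  then show ?thesis by blast
qed

lemma count_edges:
  assumes fin: "finite W" and RW: "R \<subseteq> W" and reach: "\<forall>v\<in>W. \<exists>r\<in>R. (rel F)\<^sup>*\<^sup>* v r"
    and FW: "\<forall>e\<in>F. e \<subseteq> W" and finF: "finite F"
  shows "card (W - R) \<le> card {e\<in>F. \<not> e \<subseteq> R}"
proof -
  obtain d p where dp: "\<forall>v\<in>R. d v = (0::nat)" "\<forall>v\<in>W-R. {v, p v} \<in> F \<and> p v \<in> W \<and> d (p v) + 1 = d v"
    using parent_ex[OF fin RW reach FW] by blast
  have inj: "inj_on (\<lambda>v. {v, p v}) (W - R)" using parent_inj[of R d W p] dp by blast
  have "(\<lambda>v. {v, p v}) ` (W - R) \<subseteq> {e\<in>F. \<not> e \<subseteq> R}" using dp(2) by auto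
  then show ?thesis using card_inj_on_le[OF inj] finF by auto
qed

lemma card_ext:
  assumes fin: "finite W'" and WW: "W \<subseteq> W'" "W \<noteq> {}" and FF: "F \<subseteq> F'"
    and FW: "\<forall>e\<in>F. e \<subseteq> W" and FW': "\<forall>e\<in>F'. e \<subseteq> W'" and c: "connected_on W' F'"
  shows "card (W' - W) \<le> card (F' - F)"
proof -
  obtain r where r: "r \<in> W" using WW by auto
  have reach: "\<forall>v\<in>W'. \<exists>r\<in>W. (rel F')\<^sup>*\<^sup>* v r" using c r WW unfolding connected_on_def by blast
  have finF: "finite F'"
  proof -
    have "F' \<subseteq> Pow W'" using FW' by auto
    then show ?thesis using fin by (meson finite_Pow_iff finite_subset)
  qed
  have "card (W' - W) \<le> card {e\<in>F'. \<not> e \<subseteq> W}" by (rule count_edges[OF fin WW(1) reach FW' finF])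
  also have "\<dots> \<le> card (F' - F)" using FW finF by (intro card_mono) auto
  finally show ?thesis .
qed

lemma card_tree:
  assumes fin: "finite W" and ne: "W \<noteq> {}" and st: "spanning_tree W F T" and FW: "\<forall>e\<in>F. e \<subseteq> W"
  shows "card T + 1 \<le> card W"
proof -
  obtain r where r: "r \<in> W" using ne by auto
  have T: "T \<subseteq> F" "connected_on W T" "\<forall>e\<in>T. \<not> connected_on W (T - {e})"
    using st unfolding spanning_tree_def by auto
  have TW: "\<forall>e\<in>T. e \<subseteq> W" using T(1) FW by auto
  have reach: "\<forall>v\<in>W. \<exists>r'\<in>{r}. (rel T)\<^sup>*\<^sup>* v r'" using T(2) r unfolding connected_on_def by blast
  obtain d p where dp: "\<forall>v\<in>{r}. d v = (0::nat)" "\<forall>v\<in>W-{r}. {v, p v} \<in> T \<and> p v \<in> W \<and> d (p v) + 1 = d v"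
    using parent_ex[OF fin _ reach TW] r by blast
  let ?P = "(\<lambda>v. {v, p v}) ` (W - {r})"
  have inj: "inj_on (\<lambda>v. {v, p v}) (W - {r})" using parent_inj[of "{r}" d W p] dp by blast
  have PT: "?P \<subseteq> T" using dp(2) by auto
  have "\<forall>v\<in>W. \<exists>r'\<in>{r}. (rel ?P)\<^sup>*\<^sup>* v r'" using parent_reach[OF dp] .
  then have "\<forall>v\<in>W. (rel ?P)\<^sup>*\<^sup>* v r" by blast
  then have cP: "connected_on W ?P" by (rule conn_from_root)
  have "T \<subseteq> ?P"
  proof
    fix e assume e: "e \<in> T"
    show "e \<in> ?P"
    proof (rule ccontr)
      assume "e \<notin> ?P"
      then have sub: "?P \<subseteq> T - {e}" using PT by auto
      have "connected_on W (T - {e})" unfolding connected_on_def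
      proof (intro ballI)
        fix x y assume "x \<in> W" "y \<in> W"
        then have "(rel ?P)\<^sup>*\<^sup>* x y" using cP unfolding connected_on_def by blast
        then show "(rel (T - {e}))\<^sup>*\<^sup>* x y" using sub by (rule reach_mono)
      qed
      then show False using T(3) e by blast
    qed
  qed
  then have "card T \<le> card ?P" using fin by (intro card_mono) auto
  also have "\<dots> = card (W - {r})" using card_image[OF inj] .
  also have "\<dots> = card W - 1" using r fin by simp
  finally have "card T \<le> card W - 1" .
  moreover have "card W > 0" using fin ne by (simp add: card_gt_0_iff)
  ultimately show ?thesis by linarith
qed

lemma big_cut:
  assumes fin: "finite W" and r: "r \<in> W" and c: "connected_on W F" and FW: "\<forall>e\<in>F. e \<subseteq> W"
    and finF: "finite F"
  shows "\<exists>M. card W - 1 \<le> card {e\<in>F. card (e \<inter> M) = 1}"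
proof -
  have reach: "\<forall>v\<in>W. \<exists>r'\<in>{r}. (rel F)\<^sup>*\<^sup>* v r'" using c r unfolding connected_on_def by blast
  obtain d p where dp: "\<forall>v\<in>{r}. d v = (0::nat)" "\<forall>v\<in>W-{r}. {v, p v} \<in> F \<and> p v \<in> W \<and> d (p v) + 1 = d v"
    using parent_ex[OF fin _ reach FW] r by blast
  have inj: "inj_on (\<lambda>v. {v, p v}) (W - {r})" using parent_inj[of "{r}" d W p] dp by blast
  define M where "M = {v. even (d v)}"
  have "(\<lambda>v. {v, p v}) ` (W - {r}) \<subseteq> {e\<in>F. card (e \<inter> M) = 1}"
  proof
    fix e assume "e \<in> (\<lambda>v. {v, p v}) ` (W - {r})"
    then obtain v where v: "v \<in> W - {r}" "e = {v, p v}" by auto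
    have pv: "{v, p v} \<in> F" "d (p v) + 1 = d v" using dp(2) v(1) by auto
    then have ne: "v \<noteq> p v" by auto
    have "even (d v) \<longleftrightarrow> \<not> even (d (p v))" using pv(2) by (metis even_Suc Suc_eq_plus1)
    then have "(v \<in> M) \<noteq> (p v \<in> M)" unfolding M_def by auto
    then have "card ({v, p v} \<inter> M) = 1" using ne by (cases "v \<in> M") auto
    then show "e \<in> {e\<in>F. card (e \<inter> M) = 1}" using v pv by auto
  qed
  then have "card ((\<lambda>v. {v, p v}) ` (W - {r})) \<le> card {e\<in>F. card (e \<inter> M) = 1}"
    using finF by (intro card_mono) auto
  then have "card (W - {r}) \<le> card {e\<in>F. card (e \<inter> M) = 1}" using card_image[OF inj] by simp
  then show ?thesis using r fin by auto
qed

lemma conn_get: "connected_on W F \<Longrightarrow> x \<in> W \<Longrightarrow> y \<in> W \<Longrightarrow> (rel F)\<^sup>*\<^sup>* x y"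
  unfolding connected_on_def by blast

lemma sg_facts:
  assumes "simple_graph V E"
  shows "finite V" "finite E" "\<forall>e\<in>E. e \<subseteq> V" "\<forall>e\<in>E. \<exists>x y. x \<noteq> y \<and> x \<in> V \<and> y \<in> V \<and> e = {x, y}"
proof -
  show fV: "finite V" using assms unfolding simple_graph_def by auto
  show ev: "\<forall>e\<in>E. \<exists>x y. x \<noteq> y \<and> x \<in> V \<and> y \<in> V \<and> e = {x, y}"
    using assms unfolding simple_graph_def by (rule conjunct2)
  show sub: "\<forall>e\<in>E. e \<subseteq> V"
  proof
    fix e assume "e \<in> E"
    then obtain x y where "x \<in> V" "y \<in> V" "e = {x, y}" using ev by blast
    then show "e \<subseteq> V" by simp
  qed
  then have "E \<subseteq> Pow V" by auto
  then show "finite E" using fV by (meson finite_Pow_iff finite_subset)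
qed

lemma sg_edge: "simple_graph V E \<Longrightarrow> f \<in> E \<Longrightarrow> \<exists>x y. f = {x, y} \<and> x \<noteq> y \<and> x \<in> V \<and> y \<in> V"
  unfolding simple_graph_def by metis

lemma cut_ends:
  assumes "e = {x, y}" "x \<noteq> y" "x \<in> V" "y \<in> V" "card (e \<inter> U) = 1"
  shows "\<exists>a b. e = {a, b} \<and> a \<in> U \<and> b \<in> V - U"
proof (cases "x \<in> U")
  case True
  then have "y \<notin> U" using assms by (cases "y \<in> U") auto
  then show ?thesis using assms True by blast
next
  case False
  then have "y \<in> U" using assms by (cases "y \<in> U") auto
  then show ?thesis using assms False by (intro exI[of _ y] exI[of _ x]) auto
qed

lemma inside_not_cut:
  assumes "e = {x, y}" "x \<noteq> y" "e \<subseteq> U"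
  shows "card (e \<inter> U) \<noteq> 1"
  using assms by auto

lemma theta_exists:
  assumes sg: "simple_graph V E" and UV: "U \<subseteq> V"
    and cU: "connected_on U {e\<in>E. e \<subseteq> U}" and cV: "connected_on (V - U) {e\<in>E. e \<subseteq> V - U}"
    and e1: "e1 = {a1, b1}" "e1 \<in> E" "a1 \<in> U" "b1 \<in> V - U"
    and e: "e = {a, b}" "e \<in> E" "a \<in> U" "b \<in> V - U"
  shows "\<exists>W F. biconnected_sub V E W F \<and> a1 \<in> W \<and> b1 \<in> W \<and> e \<in> F \<and> e1 \<in> F \<and>
           (\<forall>v\<in>W. (rel (F - {e\<in>E. card (e \<inter> U) = 1}))\<^sup>*\<^sup>* v a1 \<or>
                    (rel (F - {e\<in>E. card (e \<inter> U) = 1}))\<^sup>*\<^sup>* v b1)"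
proof -
  let ?B = "{e\<in>E. card (e \<inter> U) = 1}"
  let ?FU = "{e\<in>E. e \<subseteq> U}" and ?FV = "{e\<in>E. e \<subseteq> V - U}"
  have "(rel ?FU)\<^sup>*\<^sup>* a1 a" using conn_get[OF cU e1(3) e(3)] .
  from reach_walk[OF this] obtain pU where pU: "walk ?FU pU" "distinct pU" "hd pU = a1" "last pU = a"
    by blast
  have "(rel ?FV)\<^sup>*\<^sup>* b b1" using conn_get[OF cV e(4) e1(4)] .
  from reach_walk[OF this] obtain pV where pV: "walk ?FV pV" "distinct pV" "hd pV = b" "last pV = b1"
    by blast
  have sU: "set pU \<subseteq> U" using walk_set[OF pU(1)] pU(3) e1(3) by auto
  have sV: "set pV \<subseteq> V - U" using walk_set[OF pV(1)] pV(3) e(4) by auto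
  have neU: "pU \<noteq> []" and neV: "pV \<noteq> []" using pU(1) pV(1) by auto
  define P1 where "P1 = [a1, b1]"
  define P2 where "P2 = pU @ pV"
  have ab1: "a1 \<noteq> b1" using e1 by auto
  have wP1: "walk E P1" using e1 unfolding P1_def by simp
  have wU: "walk E pU" using pU(1) by (rule walk_mono) auto
  have wV: "walk E pV" using pV(1) by (rule walk_mono) auto
  have wP2: "walk E P2" unfolding P2_def using walk_append[OF neU neV] wU wV pU(4) pV(3) e by auto
  have dP2: "distinct P2" unfolding P2_def using pU(2) pV(2) sU sV by auto
  have hP2: "hd P2 = a1" unfolding P2_def using pU(3) neU by simp
  have lP2: "last P2 = b1" unfolding P2_def using pV(4) neV by simp
  have a1U: "a1 \<in> set pU" using pU(3) neU hd_in[OF pU(1)] by simp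
  have b1V: "b1 \<in> set pV" using pV(4) neV last_in[OF pV(1)] by simp
  have int: "set P1 \<inter> set P2 = {a1, b1}" unfolding P1_def P2_def using a1U b1V by auto
  have sub: "set P1 \<union> set P2 \<subseteq> V" unfolding P1_def P2_def using sU sV e1 UV by auto
  have bc: "biconnected_sub V E (set P1 \<union> set P2) (eds P1 \<union> eds P2)"
    using theta_bicon[OF wP1 wP2 _ dP2 _ hP2 _ lP2 int sub] ab1 unfolding P1_def by simp
  have edsP2: "eds P2 = eds pU \<union> eds pV \<union> {{a, b}}"
    unfolding P2_def using eds_append[OF neU neV] pU(4) pV(3) by simp
  have eF: "e \<in> eds P1 \<union> eds P2" using edsP2 e(1) by auto
  have e1F: "e1 \<in> eds P1 \<union> eds P2" using e1(1) unfolding P1_def by simp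
  have eUB: "eds pU \<subseteq> (eds P1 \<union> eds P2) - ?B"
  proof
    fix f assume f: "f \<in> eds pU"
    then have "f \<in> ?FU" using walk_eds[OF pU(1)] by (rule subsetD[rotated])
    then have fE: "f \<in> E" and fU: "f \<subseteq> U" by auto
    from sg_edge[OF sg fE] obtain x y where xy: "f = {x, y}" "x \<noteq> y" by metis
    have "card (f \<inter> U) \<noteq> 1" using inside_not_cut[OF xy fU] .
    then have "f \<notin> ?B" by simp
    then show "f \<in> (eds P1 \<union> eds P2) - ?B" using f edsP2 by auto
  qed
  have eVB: "eds pV \<subseteq> (eds P1 \<union> eds P2) - ?B"
  proof
    fix f assume f: "f \<in> eds pV"
    then have "f \<in> ?FV" using walk_eds[OF pV(1)] by (rule subsetD[rotated])
    then have "f \<subseteq> V - U" by simp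
    then have "f \<inter> U = {}" by blast
    then have "card (f \<inter> U) = 0" by simp
    then have "f \<notin> ?B" by auto
    then show "f \<in> (eds P1 \<union> eds P2) - ?B" using f edsP2 by auto
  qed
  have reach: "\<forall>v\<in>set P1 \<union> set P2. (rel ((eds P1 \<union> eds P2) - ?B))\<^sup>*\<^sup>* v a1 \<or>
                    (rel ((eds P1 \<union> eds P2) - ?B))\<^sup>*\<^sup>* v b1"
  proof
    fix v assume "v \<in> set P1 \<union> set P2"
    then have "v = a1 \<or> v = b1 \<or> v \<in> set pU \<or> v \<in> set pV" unfolding P1_def P2_def by auto
    then show "(rel ((eds P1 \<union> eds P2) - ?B))\<^sup>*\<^sup>* v a1 \<or> (rel ((eds P1 \<union> eds P2) - ?B))\<^sup>*\<^sup>* v b1"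
    proof (elim disjE)
      assume "v \<in> set pU"
      from reach_hd[OF pU(1) this] have "(rel (eds pU))\<^sup>*\<^sup>* v a1" using pU(3) by simp
      from reach_mono[OF this eUB] show ?thesis by simp
    next
      assume "v \<in> set pV"
      from reach_last[OF pV(1) this] have "(rel (eds pV))\<^sup>*\<^sup>* v b1" using pV(4) by simp
      from reach_mono[OF this eVB] show ?thesis by simp
    qed simp_all
  qed
  show ?thesis
    apply (rule exI[of _ "set P1 \<union> set P2"], rule exI[of _ "eds P1 \<union> eds P2"])
    using bc eF e1F reach unfolding P1_def by simp
qed

lemma bond_small:
  assumes at: "almost_tree 2 V E" and UV: "U \<subseteq> V"
    and cU: "connected_on U {e\<in>E. e \<subseteq> U}" and cV: "connected_on (V - U) {e\<in>E. e \<subseteq> V - U}"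
  shows "card {e\<in>E. card (e \<inter> U) = 1} \<le> 3"
proof (rule ccontr)
  assume contra: "\<not> ?thesis"
  let ?B = "{e\<in>E. card (e \<inter> U) = 1}"
  have cg: "connected_graph V E" and comp: "\<forall>W F. biconnected_component V E W F \<longrightarrow>
      (\<exists>T. spanning_tree W F T \<and> card (F - T) \<le> 2)"
    using at unfolding almost_tree_def by auto
  have sg: "simple_graph V E" using cg unfolding connected_graph_def by auto
  note sgf = sg_facts[OF sg]
  have finB: "finite ?B" using sgf(2) by simp
  have cB0: "card ?B \<noteq> 0" using contra by simp
  have "?B \<noteq> {}"
  proof
    assume h: "?B = {}"
    have "card ?B = 0" unfolding h by (rule card.empty)
    then show False using cB0 by simp
  qed
  then obtain e1 where e1B: "e1 \<in> ?B" by blast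
  have ends: "\<exists>a b. e = {a, b} \<and> a \<in> U \<and> b \<in> V - U" if eB: "e \<in> ?B" for e
  proof -
    have eE: "e \<in> E" and c1: "card (e \<inter> U) = 1" using eB by auto
    from sg_edge[OF sg eE] obtain x y where xy: "e = {x, y}" "x \<noteq> y" "x \<in> V" "y \<in> V" by metis
    show ?thesis using cut_ends[OF xy c1] .
  qed
  obtain a1 b1 where ab: "e1 = {a1, b1}" "a1 \<in> U" "b1 \<in> V - U" using ends[OF e1B] by metis
  have e1E: "e1 \<in> E" using e1B by simp
  have ab1: "a1 \<noteq> b1" using ab by auto
  define Inv where "Inv W F \<longleftrightarrow> biconnected_sub V E W F \<and> a1 \<in> W \<and> b1 \<in> W \<and> e1 \<in> F \<and>
           (\<forall>v\<in>W. (rel (F - ?B))\<^sup>*\<^sup>* v a1 \<or> (rel (F - ?B))\<^sup>*\<^sup>* v b1)" for W F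
  have th: "\<exists>W F. Inv W F \<and> e \<in> F" if eB: "e \<in> ?B" for e
  proof -
    obtain a b where e: "e = {a, b}" "a \<in> U" "b \<in> V - U" using ends[OF eB] by metis
    have eE: "e \<in> E" using eB by simp
    from theta_exists[OF sg UV cU cV ab(1) e1E ab(2,3) e(1) eE e(2,3)]
    show ?thesis unfolding Inv_def by (elim exE conjE) (intro exI conjI; assumption)
  qed
  have un: "Inv (W \<union> W') (F \<union> F')" if i1: "Inv W F" and i2: "Inv W' F'" for W F W' F'
  proof -
    have b1': "biconnected_sub V E W F" "a1 \<in> W" "b1 \<in> W" "e1 \<in> F"
      "\<forall>v\<in>W. (rel (F - ?B))\<^sup>*\<^sup>* v a1 \<or> (rel (F - ?B))\<^sup>*\<^sup>* v b1"
      using i1 unfolding Inv_def by auto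
    have b2': "biconnected_sub V E W' F'" "a1 \<in> W'" "b1 \<in> W'" "e1 \<in> F'"
      "\<forall>v\<in>W'. (rel (F' - ?B))\<^sup>*\<^sup>* v a1 \<or> (rel (F' - ?B))\<^sup>*\<^sup>* v b1"
      using i2 unfolding Inv_def by auto
    have bc: "biconnected_sub V E (W \<union> W') (F \<union> F')"
      using union_bicon[OF b1'(1) b2'(1) b1'(2) b2'(2) b1'(3) b2'(3) ab1] .
    have s1: "F - ?B \<subseteq> (F \<union> F') - ?B" and s2: "F' - ?B \<subseteq> (F \<union> F') - ?B" by auto
    have r: "\<forall>v\<in>W \<union> W'. (rel ((F \<union> F') - ?B))\<^sup>*\<^sup>* v a1 \<or> (rel ((F \<union> F') - ?B))\<^sup>*\<^sup>* v b1"
    proof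
      fix v assume "v \<in> W \<union> W'"
      then show "(rel ((F \<union> F') - ?B))\<^sup>*\<^sup>* v a1 \<or> (rel ((F \<union> F') - ?B))\<^sup>*\<^sup>* v b1"
      proof
        assume "v \<in> W"
        then have "(rel (F - ?B))\<^sup>*\<^sup>* v a1 \<or> (rel (F - ?B))\<^sup>*\<^sup>* v b1" using b1'(5) by blast
        then show ?thesis using reach_mono[OF _ s1] by blast
      next
        assume "v \<in> W'"
        then have "(rel (F' - ?B))\<^sup>*\<^sup>* v a1 \<or> (rel (F' - ?B))\<^sup>*\<^sup>* v b1" using b2'(5) by blast
        then show ?thesis using reach_mono[OF _ s2] by blast
      qed
    qed
    show ?thesis unfolding Inv_def using bc b1'(2,3,4) r by blast
  qed
  have ind: "finite D \<Longrightarrow> D \<subseteq> ?B \<Longrightarrow> \<exists>W F. Inv W F \<and> D \<subseteq> F" for D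
  proof (induction D rule: finite_induct)
    case empty
    then show ?case using th[OF e1B] by blast
  next
    case (insert e D)
    then obtain W F where wf: "Inv W F" "D \<subseteq> F" by blast
    obtain W' F' where wf': "Inv W' F'" "e \<in> F'" using th insert(4) by blast
    have "Inv (W \<union> W') (F \<union> F')" by (rule un[OF wf(1) wf'(1)])
    moreover have "insert e D \<subseteq> F \<union> F'" using wf(2) wf'(2) by blast
    ultimately show ?case by blast
  qed
  obtain W F where WF: "Inv W F" "?B \<subseteq> F" using ind[OF finB] by blast
  have bcWF: "biconnected_sub V E W F" and a1W: "a1 \<in> W" and b1W: "b1 \<in> W"
    and rWF: "\<forall>v\<in>W. (rel (F - ?B))\<^sup>*\<^sup>* v a1 \<or> (rel (F - ?B))\<^sup>*\<^sup>* v b1"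
    using WF(1) unfolding Inv_def by auto
  have sgWF: "W \<subseteq> V" "F \<subseteq> E" "\<forall>e\<in>F. e \<subseteq> W"
    using bcWF unfolding biconnected_sub_def subgraph_of_def by auto
  have finW: "finite W" using sgWF(1) sgf(1) by (rule finite_subset)
  have finF: "finite F" using sgWF(2) sgf(2) by (rule finite_subset)
  have R: "{a1, b1} \<subseteq> W" using a1W b1W by simp
  have reachR: "\<forall>v\<in>W. \<exists>r\<in>{a1, b1}. (rel (F - ?B))\<^sup>*\<^sup>* v r" using rWF by blast
  have FBW: "\<forall>e\<in>F - ?B. e \<subseteq> W" using sgWF(3) by blast
  have "card (W - {a1, b1}) \<le> card {e\<in>F - ?B. \<not> e \<subseteq> {a1, b1}}"
    using count_edges[OF finW R reachR FBW] finF by simp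
  also have "\<dots> \<le> card (F - ?B)" using finF by (intro card_mono) auto
  finally have c1: "card (W - {a1, b1}) \<le> card (F - ?B)" .
  have "card (W - {a1, b1}) = card W - 2" using R ab1 finW by (simp add: card_Diff_subset)
  moreover have "card F = card (F - ?B) + card ?B"
    using card_Diff_subset[OF finB WF(2)] card_mono[OF finF WF(2)] by linarith
  moreover have "card W \<ge> 2" using card_mono[OF finW R] ab1 by simp
  ultimately have cF: "card W + 2 \<le> card F" using c1 contra by linarith
  define P where "P = (\<lambda>(W', F'). biconnected_sub V E W' F' \<and> W \<subseteq> W' \<and> F \<subseteq> F')"
  define f where "f = (\<lambda>(W'::'a set, F'::'a set set). card W' + card F')"
  have Pbound: "\<forall>y. P y \<longrightarrow> f y < card V + card E + 1"
  proof (intro allI impI)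
    fix y assume "P y"
    obtain W' F' where y: "y = (W', F')" by (cases y)
    have "W' \<subseteq> V" "F' \<subseteq> E" using \<open>P y\<close> unfolding y P_def biconnected_sub_def subgraph_of_def by auto
    then have "card W' \<le> card V" "card F' \<le> card E" using sgf(1,2) by (auto intro: card_mono)
    then show "f y < card V + card E + 1" unfolding y f_def by simp
  qed
  have P0: "P (W, F)" unfolding P_def using bcWF by simp
  define m where "m = arg_max f P"
  have m: "P m" "\<forall>y. P y \<longrightarrow> f y \<le> f m" using arg_max_nat_lemma[OF P0 Pbound] unfolding m_def by auto
  obtain Wc Fc where mc: "m = (Wc, Fc)" by (cases m)
  have Pc: "biconnected_sub V E Wc Fc" "W \<subseteq> Wc" "F \<subseteq> Fc" using m(1) unfolding mc P_def by auto
  have sgc: "Wc \<subseteq> V" "Fc \<subseteq> E" "\<forall>e\<in>Fc. e \<subseteq> Wc" "connected_on Wc Fc"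
    using Pc(1) unfolding biconnected_sub_def subgraph_of_def by auto
  have finWc: "finite Wc" using sgc(1) sgf(1) by (rule finite_subset)
  have finFc: "finite Fc" using sgc(2) sgf(2) by (rule finite_subset)
  have bcomp: "biconnected_component V E Wc Fc"
    unfolding biconnected_component_def
  proof (rule conjI[OF Pc(1)], intro allI impI)
    fix W'' F'' assume h: "biconnected_sub V E W'' F'' \<and> Wc \<subseteq> W'' \<and> Fc \<subseteq> F''"
    then have "P (W'', F'')" unfolding P_def using Pc by auto
    then have le: "card W'' + card F'' \<le> card Wc + card Fc" using m(2) unfolding mc f_def by fastforce
    have s: "W'' \<subseteq> V" "F'' \<subseteq> E" using h unfolding biconnected_sub_def subgraph_of_def by auto
    have fW'': "finite W''" using s(1) sgf(1) by (rule finite_subset)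
    have fF'': "finite F''" using s(2) sgf(2) by (rule finite_subset)
    have "card Wc \<le> card W''" using h fW'' by (intro card_mono) auto
    moreover have "card Fc \<le> card F''" using h fF'' by (intro card_mono) auto
    ultimately have "card Wc = card W''" "card Fc = card F''" using le by linarith+
    then show "W'' = Wc \<and> F'' = Fc" using h fW'' fF'' by (metis card_subset_eq)
  qed
  obtain T where T: "spanning_tree Wc Fc T" "card (Fc - T) \<le> 2" using comp bcomp by blast
  have TF: "T \<subseteq> Fc" using T(1) unfolding spanning_tree_def by auto
  have Wne: "W \<noteq> {}" using a1W by auto
  have ct: "card T + 1 \<le> card Wc" using card_tree[OF finWc _ T(1) sgc(3)] Pc(2) Wne by auto
  have ce: "card (Wc - W) \<le> card (Fc - F)"
    using card_ext[OF finWc Pc(2) Wne Pc(3) sgWF(3) sgc(3) sgc(4)] .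
  have "card Fc = card F + card (Fc - F)"
    using card_Diff_subset[OF finF Pc(3)] card_mono[OF finFc Pc(3)] by linarith
  moreover have "card Wc = card W + card (Wc - W)"
    using card_Diff_subset[OF finW Pc(2)] card_mono[OF finWc Pc(2)] by linarith
  moreover have finT: "finite T" using finFc TF by (rule finite_subset[rotated])
  moreover have "card (Fc - T) = card Fc - card T" using card_Diff_subset[OF finT TF] .
  moreover have "card T \<le> card Fc" using card_mono[OF finFc TF] .
  ultimately have "card (Fc - T) \<ge> 3" using ct ce cF by linarith
  then show False using T(2) by simp
qed

definition box01 :: "(real ^ 'n) set" where
  "box01 = {z. \<forall>i. 0 \<le> z $ i \<and> z $ i \<le> 1}"

lemma convex_box01: "convex (box01 :: (real ^ 'n) set)"
  unfolding box01_def convex_def by (auto intro!: add_nonneg_nonneg convex_bound_le)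

lemma coord_01_eq:
  fixes a b x u :: real
  assumes "x = 0 \<or> x = 1" "0 \<le> a" "a \<le> 1" "0 \<le> b" "b \<le> 1" "0 < u" "u < 1" "x = (1 - u) * a + u * b"
  shows "a = b"
  using assms(1)
proof
  assume x0: "x = 0"
  have "(1 - u) * a \<ge> 0" "u * b \<ge> 0" using assms by auto
  then have "(1 - u) * a = 0" "u * b = 0" using assms x0 by linarith+
  then show ?thesis using assms by auto
next
  assume x1: "x = 1"
  have "(1 - u) * (1 - a) \<ge> 0" "u * (1 - b) \<ge> 0" using assms by auto
  moreover have "(1 - u) * (1 - a) + u * (1 - b) = 0" using assms x1 by (simp add: algebra_simps)
  ultimately have "(1 - u) * (1 - a) = 0" "u * (1 - b) = 0" by linarith+
  then show ?thesis using assms by auto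
qed

lemma extreme_01:
  fixes C :: "(real ^ 'n) set"
  assumes C: "C \<subseteq> box01" and x: "x \<in> C" and x01: "\<forall>i. x $ i = 0 \<or> x $ i = 1"
  shows "x extreme_point_of (convex hull C)"
proof -
  have Pb: "convex hull C \<subseteq> box01" using C convex_box01 by (rule hull_minimal)
  show ?thesis unfolding extreme_point_of_def
  proof (intro conjI ballI)
    show "x \<in> convex hull C" using x by (rule hull_inc)
    fix a b assume a: "a \<in> convex hull C" and b: "b \<in> convex hull C"
    show "x \<notin> open_segment a b"
    proof
      assume "x \<in> open_segment a b"
      then obtain u where u: "a \<noteq> b" "0 < u" "u < 1" "x = (1 - u) *\<^sub>R a + u *\<^sub>R b"
        unfolding in_segment by blast
      have "a $ i = b $ i" for i
      proof (rule coord_01_eq)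
        show "x $ i = 0 \<or> x $ i = 1" using x01 by blast
        show "0 \<le> a $ i" "a $ i \<le> 1" "0 \<le> b $ i" "b $ i \<le> 1"
          using a b Pb unfolding box01_def by auto
        show "0 < u" "u < 1" using u by auto
        show "x $ i = (1 - u) * a $ i + u * b $ i" using u(4) by simp
      qed
      then have "a = b" by (simp add: vec_eq_iff)
      then show False using u(1) by simp
    qed
  qed
qed

lemma coord_face:
  fixes C :: "(real ^ 'n) set" and x :: "real ^ 'n"
  assumes C: "C \<subseteq> box01" and x01: "\<forall>i. x $ i = 0 \<or> x $ i = 1"
  shows "(convex hull C \<inter> {z. \<forall>i\<in>I. z $ i = x $ i}) face_of (convex hull C)"
proof -
  let ?P = "convex hull C"
  have Pb: "?P \<subseteq> box01" using C convex_box01 by (rule hull_minimal)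
  have cP: "convex ?P" by (rule convex_convex_hull)
  have one: "(?P \<inter> {z. z $ i = x $ i}) face_of ?P" for i
  proof (cases "x $ i = 1")
    case True
    have "(?P \<inter> {z. axis i 1 \<bullet> z = 1}) face_of ?P"
      using Pb by (intro face_of_Int_supporting_hyperplane_le[OF cP]) (auto simp: box01_def inner_axis')
    then show ?thesis using True by (simp add: inner_axis')
  next
    case False
    then have x0: "x $ i = 0" using x01 by blast
    have "(?P \<inter> {z. axis i 1 \<bullet> z = 0}) face_of ?P"
      using Pb by (intro face_of_Int_supporting_hyperplane_ge[OF cP]) (auto simp: box01_def inner_axis')
    then show ?thesis using x0 by (simp add: inner_axis')
  qed
  show ?thesis
  proof (cases "I = {}")
    case True
    then show ?thesis using face_of_refl[OF cP] by simp
  next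
    case False
    have eq: "?P \<inter> {z. \<forall>i\<in>I. z $ i = x $ i} = \<Inter> ((\<lambda>i. ?P \<inter> {z. z $ i = x $ i}) ` I)"
      using False by auto
    show ?thesis unfolding eq
      by (rule face_of_Inter) (use False one in auto)
  qed
qed

lemma nonadj_geom:
  fixes P F :: "(real ^ 'n) set"
  assumes F: "F face_of P" "aff_dim F = 1" and x: "x extreme_point_of F" and y: "y extreme_point_of F"
    and xy: "x \<noteq> y" and a: "a extreme_point_of P" and b: "b \<in> P"
    and sum: "x + y = a + b" and ax: "a \<noteq> x" and ay: "a \<noteq> y"
  shows False
proof -
  have xF: "x \<in> F" and yF: "y \<in> F" using x y unfolding extreme_point_of_def by auto
  have FP: "F \<subseteq> P" using F(1) by (rule face_of_imp_subset)
  have cF: "convex F" using F(1) by (rule face_of_imp_convex)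
  have aP: "a \<in> P" using a unfolding extreme_point_of_def by auto
  have mxy: "midpoint x y = midpoint a b" unfolding midpoint_def using sum by simp
  have mF: "midpoint x y \<in> F"
    using cF xF yF midpoint_in_closed_segment[of x y] unfolding convex_contains_segment by blast
  show False
  proof (cases "a = b")
    case True
    then have "midpoint x y = a" using mxy by simp
    moreover have "midpoint x y \<in> open_segment x y" using xy by simp
    ultimately show False using a xF yF FP unfolding extreme_point_of_def by blast
  next
    case False
    have "midpoint a b \<in> open_segment a b" using False by simp
    then have aF: "a \<in> F" using face_ofD[OF F(1) _ aP b] mF mxy by metis
    have "collinear F" using F(2) by (simp add: collinear_aff_dim)
    moreover have "{x, y, a} \<subseteq> F" using xF yF aF by auto
    ultimately have "collinear {x, y, a}" by (rule collinear_subset)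
    then have "between (y, a) x \<or> between (a, x) y \<or> between (x, y) a"
      by (simp add: collinear_between_cases)
    moreover have aeF: "a extreme_point_of F" using extreme_point_of_face[OF F(1)] a aF by blast
    ultimately show False
    proof (elim disjE)
      assume "between (y, a) x"
      then have "x \<in> open_segment y a" using xy ax by (simp add: between_mem_segment open_segment_def)
      then show False using x yF aF unfolding extreme_point_of_def by blast
    next
      assume "between (a, x) y"
      then have "y \<in> open_segment a x" using xy ay by (simp add: between_mem_segment open_segment_def)
      then show False using y xF aF unfolding extreme_point_of_def by blast
    next
      assume "between (x, y) a"
      then have "a \<in> open_segment x y" using ax ay by (simp add: between_mem_segment open_segment_def)
      then show False using aeF xF yF unfolding extreme_point_of_def by blast
    qed
  qed
qed

definition sd :: "'a set \<Rightarrow> 'a set \<Rightarrow> 'a set" where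
  "sd A B = (A - B) \<union> (B - A)"

lemma sd_mem: "x \<in> sd A B \<longleftrightarrow> (x \<in> A) \<noteq> (x \<in> B)"
  unfolding sd_def by auto

lemma cv_nth: "cut_vec E X $ e = (if e \<in> E \<and> card (e \<inter> X) = 1 then 1 else 0)"
  by (simp add: cut_vec_def)

lemma card_pair: "p \<noteq> q \<Longrightarrow> card ({p, q} \<inter> X) = 1 \<longleftrightarrow> ((p \<in> X) \<noteq> (q \<in> X))"
  by (cases "p \<in> X"; cases "q \<in> X") (auto simp: Int_insert_left)

lemma cv_edge: "e \<in> E \<Longrightarrow> e = {p, q} \<Longrightarrow> p \<noteq> q \<Longrightarrow>
    cut_vec E X $ e = (if (p \<in> X) \<noteq> (q \<in> X) then 1 else 0)"
  using card_pair[of p q X] by (simp add: cv_nth)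

lemma cv_01: "cut_vec E X $ i = 0 \<or> cut_vec E X $ i = 1"
  by (simp add: cv_nth)

lemma cv_eq:
  assumes sg: "simple_graph V E" and h: "\<forall>p\<in>V. \<forall>q\<in>V. ((p \<in> A) \<noteq> (p \<in> B)) = ((q \<in> A) \<noteq> (q \<in> B))"
  shows "cut_vec E A = cut_vec E B"
proof -
  have "cut_vec E A $ e = cut_vec E B $ e" for e
  proof (cases "e \<in> E")
    case True
    from sg_edge[OF sg True] obtain p q where pq: "e = {p, q}" "p \<noteq> q" "p \<in> V" "q \<in> V" by metis
    have "((p \<in> A) \<noteq> (p \<in> B)) = ((q \<in> A) \<noteq> (q \<in> B))" using h pq by blast
    then have "((p \<in> A) \<noteq> (q \<in> A)) = ((p \<in> B) \<noteq> (q \<in> B))" by blast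
    then show ?thesis using cv_edge[OF True pq(1,2)] by simp
  next
    case False
    then show ?thesis by (simp add: cv_nth)
  qed
  then show ?thesis by (simp add: vec_eq_iff)
qed

lemma C_box: "{cut_vec E S | S. S \<subseteq> V} \<subseteq> box01"
  unfolding box01_def by (auto simp: cv_nth)

lemma C_finite: "finite V \<Longrightarrow> finite {cut_vec E S | S. S \<subseteq> V}"
proof -
  assume "finite V"
  have "{cut_vec E S | S. S \<subseteq> V} = cut_vec E ` Pow V" by auto
  then show ?thesis using \<open>finite V\<close> by simp
qed

lemma verts: "skel_vertices (cut_polytope V E) = {cut_vec E S | S. S \<subseteq> V}"
proof
  show "skel_vertices (cut_polytope V E) \<subseteq> {cut_vec E S | S. S \<subseteq> V}"
    unfolding skel_vertices_def cut_polytope_def using extreme_point_of_convex_hull by blast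
  show "{cut_vec E S | S. S \<subseteq> V} \<subseteq> skel_vertices (cut_polytope V E)"
  proof
    fix x assume x: "x \<in> {cut_vec E S | S. S \<subseteq> V}"
    have "x extreme_point_of (convex hull {cut_vec E S | S. S \<subseteq> V})"
      using extreme_01[OF C_box x] cv_01 x by blast
    then show "x \<in> skel_vertices (cut_polytope V E)" unfolding skel_vertices_def cut_polytope_def by simp
  qed
qed

lemma const_on_conn:
  assumes c: "connected_on D {e\<in>E. e \<subseteq> D}" and h: "\<And>p q. {p, q} \<in> E \<Longrightarrow> {p, q} \<subseteq> D \<Longrightarrow> t p = t q"
    and p: "p \<in> D" and q: "q \<in> D"
  shows "t p = t q"
proof -
  have "(rel {e\<in>E. e \<subseteq> D})\<^sup>*\<^sup>* p q" using conn_get[OF c p q] .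
  then show ?thesis
  proof (induction rule: rtranclp_induct)
    case base then show ?case by simp
  next
    case (step y z)
    then have "{y, z} \<in> E" "{y, z} \<subseteq> D" by auto
    then show ?case using h step by metis
  qed
qed

lemma edge_neq: "simple_graph V E \<Longrightarrow> {a, b} \<in> E \<Longrightarrow> a \<noteq> b"
proof
  assume sg: "simple_graph V E" and e: "{a, b} \<in> E" and ab: "a = b"
  from sg_edge[OF sg e] obtain x y where xy: "{a, b} = {x, y}" "x \<noteq> y" by metis
  then have "{a} = {x, y}" using ab by simp
  then have "x = a" "y = a" by (metis insertI1 singletonD, metis insert_commute insertI1 singletonD)
  then show False using xy(2) by simp
qed

lemma adj_suff:
  fixes V :: "'v::finite set"
  assumes sg: "simple_graph V E" and SV: "S \<subseteq> V" and DV: "D \<subseteq> V"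
    and cD: "connected_on D {e\<in>E. e \<subseteq> D}" and cVD: "connected_on (V - D) {e\<in>E. e \<subseteq> V - D}"
    and ne: "cut_vec E S \<noteq> cut_vec E (sd S D)"
  shows "skel_adj (cut_polytope V E) (cut_vec E S) (cut_vec E (sd S D))"
proof -
  let ?C = "{cut_vec E S | S. S \<subseteq> V}"
  let ?P = "convex hull ?C"
  let ?x = "cut_vec E S" and ?y = "cut_vec E (sd S D)"
  define I where "I = {e\<in>E. card (e \<inter> D) \<noteq> 1}"
  define F where "F = ?P \<inter> {z. \<forall>i\<in>I. z $ i = ?x $ i}"
  have fin: "finite V" using sg_facts(1)[OF sg] .
  have face: "F face_of ?P" unfolding F_def by (rule coord_face[OF C_box]) (use cv_01 in blast)
  have xC: "?x \<in> ?C" using SV by blast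
  have sdV: "sd S D \<subseteq> V" using SV DV unfolding sd_def by auto
  have yC: "?y \<in> ?C" using sdV by blast
  have xF: "?x \<in> F" unfolding F_def using hull_inc[OF xC] by simp
  have yF: "?y \<in> F"
  proof -
    have "?y $ i = ?x $ i" if i: "i \<in> I" for i
    proof -
      have iE: "i \<in> E" and iD: "card (i \<inter> D) \<noteq> 1" using i unfolding I_def by auto
      from sg_edge[OF sg iE] obtain p q where pq: "i = {p, q}" "p \<noteq> q" by metis
      have "(p \<in> D) = (q \<in> D)" using iD card_pair[OF pq(2), of D] pq(1) by blast
      then show ?thesis using cv_edge[OF iE pq, of S] cv_edge[OF iE pq, of "sd S D"] by (auto simp: sd_mem)
    qed
    then show ?thesis unfolding F_def using hull_inc[OF yC] by simp
  qed
  have twopts: "z \<in> {?x, ?y}" if zC: "z \<in> ?C" and zF: "z \<in> F" for z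
  proof -
    obtain A where A: "z = cut_vec E A" "A \<subseteq> V" using zC by blast
    define t where "t p = ((p \<in> A) \<noteq> (p \<in> S))" for p
    have agree: "cut_vec E A $ i = ?x $ i" if "i \<in> I" for i using zF that A(1) unfolding F_def by auto
    have edge_t: "t p = t q" if pq: "{p, q} \<in> E" "card ({p, q} \<inter> D) \<noteq> 1" for p q
    proof -
      from sg_edge[OF sg pq(1)] obtain a b where ab: "{p, q} = {a, b}" "a \<noteq> b" by metis
      have pq2: "p \<noteq> q" using ab by (auto simp: doubleton_eq_iff)
      have "cut_vec E A $ {p, q} = ?x $ {p, q}" using agree pq unfolding I_def by blast
      then have "((p \<in> A) \<noteq> (q \<in> A)) = ((p \<in> S) \<noteq> (q \<in> S))"
        using cv_edge[OF pq(1) refl pq2, of A] cv_edge[OF pq(1) refl pq2, of S]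
        by (auto split: if_splits)
      then show ?thesis unfolding t_def by blast
    qed
    have tD: "t p = t q" if "p \<in> D" "q \<in> D" for p q
    proof (rule const_on_conn[OF cD _ that])
      fix a b assume ab: "{a, b} \<in> E" "{a, b} \<subseteq> D"
      have ne: "a \<noteq> b" using edge_neq[OF sg ab(1)] .
      have "card ({a, b} \<inter> D) = 2" using ab(2) ne by (simp add: Int_absorb2)
      then show "t a = t b" using edge_t[OF ab(1)] by simp
    qed
    have tVD: "t p = t q" if "p \<in> V - D" "q \<in> V - D" for p q
    proof (rule const_on_conn[OF cVD _ that])
      fix a b assume ab: "{a, b} \<in> E" "{a, b} \<subseteq> V - D"
      have "{a, b} \<inter> D = {}" using ab(2) by auto
      then show "t a = t b" using edge_t[OF ab(1)] by simp
    qed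
    show ?thesis
    proof (cases "\<forall>p\<in>V. \<forall>q\<in>V. t p = t q")
      case True
      then have "cut_vec E A = ?x" using cv_eq[OF sg] unfolding t_def by blast
      then show ?thesis using A by simp
    next
      case False
      then obtain p0 q0 where pq0: "p0 \<in> V" "q0 \<in> V" "t p0 \<noteq> t q0" by blast
      have diff: "t p \<noteq> t q" if "p \<in> D" "q \<in> V - D" for p q
      proof (cases "p0 \<in> D")
        case True
        have "q0 \<notin> D"
        proof
          assume "q0 \<in> D"
          then have "t p0 = t q0" using tD[OF True] by blast
          then show False using pq0(3) by simp
        qed
        then have q0': "q0 \<in> V - D" using pq0(2) by simp
        have "t p = t p0" using tD[OF that(1) True] .
        moreover have "t q = t q0" using tVD[OF that(2) q0'] .
        ultimately show ?thesis using pq0(3) by (metis (full_types))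
      next
        case False
        then have p0': "p0 \<in> V - D" using pq0(1) by simp
        have "q0 \<in> D"
        proof (rule ccontr)
          assume "q0 \<notin> D"
          then have "q0 \<in> V - D" using pq0(2) by simp
          then have "t p0 = t q0" using tVD[OF p0'] by blast
          then show False using pq0(3) by simp
        qed
        have "t p = t q0" using tD[OF that(1) \<open>q0 \<in> D\<close>] .
        moreover have "t q = t p0" using tVD[OF that(2) p0'] .
        ultimately show ?thesis using pq0(3) by (metis (full_types))
      qed
      have xa: "((p \<in> A) \<noteq> (p \<in> sd S D)) = (t p \<noteq> (p \<in> D))" for p
        unfolding t_def sd_mem by (cases "p \<in> A"; cases "p \<in> S"; cases "p \<in> D") simp_all
      have al: "(t p \<noteq> (p \<in> D)) = (t q \<noteq> (q \<in> D))" if p: "p \<in> V" and q: "q \<in> V" for p q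
      proof (cases "p \<in> D")
        case pD: True
        show ?thesis
        proof (cases "q \<in> D")
          case True
          then show ?thesis using pD tD[OF pD True] by simp
        next
          case False
          then have "q \<in> V - D" using q by simp
          then have "t p \<noteq> t q" using diff[OF pD] by blast
          then show ?thesis using pD False by (cases "t p") simp_all
        qed
      next
        case pD: False
        then have pVD: "p \<in> V - D" using p by simp
        show ?thesis
        proof (cases "q \<in> D")
          case True
          then have "t q \<noteq> t p" using diff[OF True pVD] by blast
          then show ?thesis using pD True by (cases "t p") simp_all
        next
          case False
          then have "q \<in> V - D" using q by simp
          then show ?thesis using pD False tVD[OF pVD] by simp
        qed
      qed
      have "\<forall>p\<in>V. \<forall>q\<in>V. ((p \<in> A) \<noteq> (p \<in> sd S D)) = ((q \<in> A) \<noteq> (q \<in> sd S D))"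
        unfolding xa using al by blast
      then have "cut_vec E A = ?y" using cv_eq[OF sg] by blast
      then show ?thesis using A by simp
    qed
  qed
  have compC: "compact ?C" using C_finite[OF fin] by (rule finite_imp_compact)
  obtain C' where C': "C' \<subseteq> ?C" "F = convex hull C'" by (rule face_of_convex_hull_subset[OF compC face])
  have "C' \<subseteq> {?x, ?y}"
  proof
    fix z assume z: "z \<in> C'"
    have "z \<in> convex hull C'" by (rule hull_inc[OF z])
    then have zF: "z \<in> F" using C'(2) by simp
    have zC: "z \<in> ?C" using C'(1) z by (rule subsetD)
    show "z \<in> {?x, ?y}" by (rule twopts[OF zC zF])
  qed
  then have "convex hull C' \<subseteq> convex hull {?x, ?y}" by (rule hull_mono)
  then have F1: "F \<subseteq> convex hull {?x, ?y}" using C'(2) by simp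
  have xyF: "{?x, ?y} \<subseteq> F" using xF yF by simp
  have cvF: "convex F" using face by (rule face_of_imp_convex)
  have F2: "convex hull {?x, ?y} \<subseteq> F"
    using xyF cvF by (rule hull_minimal)
  have Feq: "F = closed_segment ?x ?y" using F1 F2 by (simp add: segment_convex_hull)
  have "aff_dim F = 1" using Feq ne by (simp add: segment_convex_hull aff_dim_convex_hull)
  moreover have "?x extreme_point_of F" "?y extreme_point_of F" unfolding Feq extreme_point_of_segment by auto
  ultimately show ?thesis unfolding skel_adj_def cut_polytope_def using ne face by blast
qed

lemma cross_edge:
  assumes "(rel E)\<^sup>*\<^sup>* a b" "a \<in> W" "b \<notin> W"
  shows "\<exists>p q. {p, q} \<in> E \<and> p \<in> W \<and> q \<notin> W"
  using assms
proof (induction rule: rtranclp_induct)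
  case base then show ?case by simp
next
  case (step y z)
  show ?case
  proof (cases "y \<in> W")
    case True then show ?thesis using step by blast
  next
    case False then show ?thesis using step by blast
  qed
qed

lemma bool_sum:
  fixes ps qs p1 q1 pd qd :: bool
  assumes "p1 \<longrightarrow> pd" "q1 \<longrightarrow> qd" "\<not> (p1 \<and> qd \<and> \<not> q1)" "\<not> (q1 \<and> pd \<and> \<not> p1)"
  shows "(if ps \<noteq> qs then 1 else 0) + (if (ps \<noteq> pd) \<noteq> (qs \<noteq> qd) then 1 else 0) =
         (if (ps \<noteq> p1) \<noteq> (qs \<noteq> q1) then 1 else (0::real)) +
         (if (ps \<noteq> (pd \<and> \<not> p1)) \<noteq> (qs \<noteq> (qd \<and> \<not> q1)) then 1 else 0)"
  using assms by (cases ps; cases qs; cases p1; cases q1; cases pd; cases qd) simp_all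

lemma nonadj_comb:
  assumes sg: "simple_graph V E" and cg: "connected_on V E" and SV: "S \<subseteq> V" and DV: "D \<subseteq> V"
    and nc: "\<not> connected_on D {e\<in>E. e \<subseteq> D}"
  shows "\<exists>A B. A \<subseteq> V \<and> B \<subseteq> V \<and> cut_vec E S + cut_vec E (sd S D) = cut_vec E A + cut_vec E B \<and>
     cut_vec E A \<noteq> cut_vec E S \<and> cut_vec E A \<noteq> cut_vec E (sd S D)"
proof -
  let ?FD = "{e\<in>E. e \<subseteq> D}"
  obtain x y where xy: "x \<in> D" "y \<in> D" "\<not> (rel ?FD)\<^sup>*\<^sup>* x y"
    using nc unfolding connected_on_def by blast
  define D1 where "D1 = {z\<in>D. (rel ?FD)\<^sup>*\<^sup>* x z}"
  define D2 where "D2 = D - D1"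
  have noedge: "False" if pq: "{p, q} \<in> E" "p \<in> D1" "q \<in> D2" for p q
  proof -
    have "{p, q} \<subseteq> D" using pq unfolding D1_def D2_def by auto
    then have "rel ?FD p q" using pq(1) by simp
    moreover have "(rel ?FD)\<^sup>*\<^sup>* x p" using pq(2) unfolding D1_def by simp
    ultimately have "(rel ?FD)\<^sup>*\<^sup>* x q" by (rule rtranclp.rtrancl_into_rtrancl[rotated])
    then show False using pq(3) unfolding D1_def D2_def by simp
  qed
  have D1D: "D1 \<subseteq> D" unfolding D1_def by auto
  have xD1: "x \<in> D1" unfolding D1_def using xy(1) by simp
  have yD2: "y \<in> D2" unfolding D1_def D2_def using xy by simp
  define A where "A = sd S D1"
  define B where "B = sd S D2"
  have AV: "A \<subseteq> V" using SV DV D1D unfolding A_def sd_def by auto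
  have BV: "B \<subseteq> V" using SV DV unfolding B_def D2_def sd_def by auto
  have sum: "cut_vec E S + cut_vec E (sd S D) = cut_vec E A + cut_vec E B"
  proof -
    have "(cut_vec E S + cut_vec E (sd S D)) $ e = (cut_vec E A + cut_vec E B) $ e" for e
    proof (cases "e \<in> E")
      case True
      from sg_edge[OF sg True] obtain p q where pq: "e = {p, q}" "p \<noteq> q" by metis
      have c1: "\<not> (p \<in> D1 \<and> q \<in> D \<and> q \<notin> D1)" using noedge[of p q] True pq unfolding D2_def by auto
      have c2: "\<not> (q \<in> D1 \<and> p \<in> D \<and> p \<notin> D1)" using noedge[of q p] True pq unfolding D2_def
        by (auto simp: insert_commute)
      have m: "(p \<in> A) = ((p \<in> S) \<noteq> (p \<in> D1))" "(q \<in> A) = ((q \<in> S) \<noteq> (q \<in> D1))"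
        "(p \<in> B) = ((p \<in> S) \<noteq> (p \<in> D \<and> p \<notin> D1))" "(q \<in> B) = ((q \<in> S) \<noteq> (q \<in> D \<and> q \<notin> D1))"
        "(p \<in> sd S D) = ((p \<in> S) \<noteq> (p \<in> D))" "(q \<in> sd S D) = ((q \<in> S) \<noteq> (q \<in> D))"
        unfolding A_def B_def D2_def sd_mem by auto
      show ?thesis
        unfolding vector_add_component cv_edge[OF True pq] m
        by (rule bool_sum) (use D1D c1 c2 in auto)
    next
      case False
      then show ?thesis by (simp add: cv_nth)
    qed
    then show ?thesis by (simp add: vec_eq_iff)
  qed
  have yV: "y \<in> V" "x \<in> V" using xy DV by auto
  have r: "(rel E)\<^sup>*\<^sup>* x y" using cg yV unfolding connected_on_def by blast
  obtain p q where pq: "{p, q} \<in> E" "p \<in> D1" "q \<notin> D1"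
    using cross_edge[OF r xD1] yD2 unfolding D2_def by blast
  have pq2: "p \<noteq> q" using pq by auto
  have ne1: "cut_vec E A \<noteq> cut_vec E S"
  proof
    assume "cut_vec E A = cut_vec E S"
    then have "cut_vec E A $ {p, q} = cut_vec E S $ {p, q}" by simp
    then show False using cv_edge[OF pq(1) refl pq2, of A] cv_edge[OF pq(1) refl pq2, of S] pq
      unfolding A_def sd_mem by (auto split: if_splits)
  qed
  have r2: "(rel E)\<^sup>*\<^sup>* y x" using cg yV unfolding connected_on_def by blast
  obtain p' q' where pq': "{p', q'} \<in> E" "p' \<in> D2" "q' \<notin> D2"
    using cross_edge[OF r2 yD2] xD1 unfolding D2_def by blast
  have pq2': "p' \<noteq> q'" using pq' by auto
  have ne2: "cut_vec E A \<noteq> cut_vec E (sd S D)"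
  proof
    assume "cut_vec E A = cut_vec E (sd S D)"
    then have "cut_vec E A $ {p', q'} = cut_vec E (sd S D) $ {p', q'}" by simp
    moreover have "(q' \<in> D1) = (q' \<in> D)" using pq'(3) D1D unfolding D2_def by auto
    moreover have "p' \<in> D" "p' \<notin> D1" using pq'(2) unfolding D2_def by auto
    ultimately show False using cv_edge[OF pq'(1) refl pq2', of A] cv_edge[OF pq'(1) refl pq2', of "sd S D"]
      unfolding A_def sd_mem by (auto split: if_splits)
  qed
  show ?thesis using AV BV sum ne1 ne2 by blast
qed

lemma sd_sd: "sd S (sd S T) = T" unfolding sd_def by auto

lemma adj_vertices:
  assumes "skel_adj (cut_polytope V E) x y"
  shows "x \<in> {cut_vec E S | S. S \<subseteq> V}" "y \<in> {cut_vec E S | S. S \<subseteq> V}"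
proof -
  obtain F where F: "F face_of cut_polytope V E" "x extreme_point_of F" "y extreme_point_of F"
    using assms unfolding skel_adj_def by blast
  have "x extreme_point_of cut_polytope V E" "y extreme_point_of cut_polytope V E"
    using extreme_point_of_face[OF F(1)] F(2,3) by auto
  then show "x \<in> {cut_vec E S | S. S \<subseteq> V}" "y \<in> {cut_vec E S | S. S \<subseteq> V}"
    unfolding cut_polytope_def using extreme_point_of_convex_hull by blast+
qed

lemma adj_bound:
  fixes V :: "'v::finite set"
  assumes at: "almost_tree 2 V E" and SV: "S \<subseteq> V" and TV: "T \<subseteq> V"
    and adj: "skel_adj (cut_polytope V E) (cut_vec E S) (cut_vec E T)"
  shows "card {e\<in>E. cut_vec E S $ e \<noteq> cut_vec E T $ e} \<le> 3"
proof -
  have cg: "connected_graph V E" using at unfolding almost_tree_def by auto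
  then have sg: "simple_graph V E" and cV: "connected_on V E" unfolding connected_graph_def by auto
  let ?P = "cut_polytope V E"
  let ?C = "{cut_vec E S | S. S \<subseteq> V}"
  define D where "D = sd S T"
  have DV: "D \<subseteq> V" using SV TV unfolding D_def sd_def by auto
  have T: "cut_vec E T = cut_vec E (sd S D)" unfolding D_def sd_sd ..
  have contra: False if nc: "\<not> connected_on D' {e\<in>E. e \<subseteq> D'}" and D'V: "D' \<subseteq> V"
      and eqT: "cut_vec E (sd S D') = cut_vec E T" for D'
  proof -
    obtain A B where AB: "A \<subseteq> V" "B \<subseteq> V"
      "cut_vec E S + cut_vec E (sd S D') = cut_vec E A + cut_vec E B"
      "cut_vec E A \<noteq> cut_vec E S" "cut_vec E A \<noteq> cut_vec E (sd S D')"
      using nonadj_comb[OF sg cV SV D'V nc] by blast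
    obtain F where F: "cut_vec E S \<noteq> cut_vec E T" "F face_of ?P" "aff_dim F = 1"
      "cut_vec E S extreme_point_of F" "cut_vec E T extreme_point_of F"
      using adj unfolding skel_adj_def by blast
    have aC: "cut_vec E A \<in> ?C" using AB(1) by blast
    have bC: "cut_vec E B \<in> ?C" using AB(2) by blast
    have a: "cut_vec E A extreme_point_of ?P" using aC verts[of V E] unfolding skel_vertices_def by blast
    have b: "cut_vec E B \<in> ?P" unfolding cut_polytope_def using bC by (rule hull_inc)
    show False
      using nonadj_geom[OF F(2,3,4,5,1) a b] AB(3,4,5) eqT by simp
  qed
  have D1: "connected_on D {e\<in>E. e \<subseteq> D}"
    using contra[OF _ DV T[symmetric]] by blast
  have D2: "connected_on (V - D) {e\<in>E. e \<subseteq> V - D}"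
  proof (rule ccontr)
    assume nc: "\<not> connected_on (V - D) {e\<in>E. e \<subseteq> V - D}"
    have "cut_vec E (sd S (V - D)) = cut_vec E (sd S D)"
      by (rule cv_eq[OF sg]) (use DV in \<open>auto simp: sd_mem\<close>)
    then show False using contra[OF nc] T by auto
  qed
  have "{e\<in>E. cut_vec E S $ e \<noteq> cut_vec E T $ e} = {e\<in>E. card (e \<inter> D) = 1}"
  proof (intro Collect_cong conj_cong refl)
    fix e assume eE: "e \<in> E"
    from sg_edge[OF sg eE] obtain p q where pq: "e = {p, q}" "p \<noteq> q" by metis
    show "(cut_vec E S $ e \<noteq> cut_vec E T $ e) = (card (e \<inter> D) = 1)"
      unfolding pq(1) card_pair[OF pq(2)] cv_edge[OF eE[unfolded pq(1)] refl pq(2)] D_def sd_mem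
      by auto
  qed
  moreover have "card {e\<in>E. card (e \<inter> D) = 1} \<le> 3" by (rule bond_small[OF at DV D1 D2])
  ultimately show ?thesis by simp
qed

definition wt :: "'v set set \<Rightarrow> real ^ ('v::finite set) \<Rightarrow> nat" where
  "wt E z = card {e\<in>E. z $ e = 1}"

lemma walk_wt:
  fixes V :: "'v::finite set"
  assumes at: "almost_tree 2 V E"
  shows "(skel_adj (cut_polytope V E) ^^ k) x y \<Longrightarrow> x \<in> {cut_vec E S | S. S \<subseteq> V} \<Longrightarrow>
     y \<in> {cut_vec E S | S. S \<subseteq> V} \<and> wt E y \<le> wt E x + 3 * k"
proof (induction k arbitrary: y)
  case 0
  then show ?case by simp
next
  case (Suc k)
  from Suc.prems(1) obtain z where z: "(skel_adj (cut_polytope V E) ^^ k) x z"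
    "skel_adj (cut_polytope V E) z y" by auto
  have IH: "z \<in> {cut_vec E S | S. S \<subseteq> V}" "wt E z \<le> wt E x + 3 * k" using Suc.IH[OF z(1) Suc.prems(2)] by auto
  have yC: "y \<in> {cut_vec E S | S. S \<subseteq> V}" using adj_vertices(2)[OF z(2)] .
  obtain S T where ST: "z = cut_vec E S" "S \<subseteq> V" "y = cut_vec E T" "T \<subseteq> V" using IH(1) yC by blast
  have bnd: "card {e\<in>E. z $ e \<noteq> y $ e} \<le> 3" using adj_bound[OF at ST(2,4)] z(2) ST by simp
  have cg: "connected_graph V E" using at unfolding almost_tree_def by auto
  then have finE: "finite E" using sg_facts(2) unfolding connected_graph_def by auto
  have "{e\<in>E. y $ e = 1} \<subseteq> {e\<in>E. z $ e = 1} \<union> {e\<in>E. z $ e \<noteq> y $ e}" by auto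
  then have "wt E y \<le> card ({e\<in>E. z $ e = 1} \<union> {e\<in>E. z $ e \<noteq> y $ e})"
    unfolding wt_def using finE by (intro card_mono) auto
  also have "\<dots> \<le> wt E z + card {e\<in>E. z $ e \<noteq> y $ e}" unfolding wt_def by (rule card_Un_le)
  finally show ?case using IH(2) bnd yC by simp
qed

fun sdl :: "'a set list \<Rightarrow> 'a set" where
  "sdl [] = {}"
| "sdl (C # Cs) = sd C (sdl Cs)"

definition flip :: "'v set set \<Rightarrow> 'v set \<Rightarrow> 'v set \<Rightarrow> bool" where
  "flip E W C \<longleftrightarrow> C \<subseteq> W \<and> connected_on C {e\<in>E. e \<subseteq> C} \<and> connected_on (W - C) {e\<in>E. e \<subseteq> W - C}"

definition good :: "'v set set \<Rightarrow> 'v set \<Rightarrow> bool" where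
  "good E W \<longleftrightarrow> (\<forall>U \<subseteq> W. \<exists>Cs. length Cs + 1 \<le> card W \<and> (\<forall>C\<in>set Cs. flip E W C) \<and>
      (sdl Cs = U \<or> sdl Cs = W - U))"

lemma conn_insert:
  assumes c: "connected_on X {e\<in>E. e \<subseteq> X}" and b: "b \<in> X" and wb: "{w, b} \<in> E"
  shows "connected_on (insert w X) {e\<in>E. e \<subseteq> insert w X}"
proof (rule conn_from_root[where r = b], intro ballI)
  fix v assume v: "v \<in> insert w X"
  show "(rel {e\<in>E. e \<subseteq> insert w X})\<^sup>*\<^sup>* v b"
  proof (cases "v \<in> X")
    case True
    have "(rel {e\<in>E. e \<subseteq> X})\<^sup>*\<^sup>* v b" using conn_get[OF c True b] .
    then show ?thesis by (rule reach_mono) auto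
  next
    case False
    then have "v = w" using v by simp
    moreover have "rel {e\<in>E. e \<subseteq> insert w X} w b" using wb b by auto
    ultimately show ?thesis by auto
  qed
qed

lemma conn_single: "connected_on {w} F"
  unfolding connected_on_def by simp

lemma lift:
  assumes f: "flip E W C" and w: "w \<notin> W" and b: "b \<in> W" and wb: "{w, b} \<in> E"
  shows "flip E (insert w W) (if b \<in> C then insert w C else C) \<and>
         (if b \<in> C then insert w C else C) \<inter> W = C"
proof -
  have f': "C \<subseteq> W" "connected_on C {e\<in>E. e \<subseteq> C}" "connected_on (W - C) {e\<in>E. e \<subseteq> W - C}"
    using f unfolding flip_def by auto
  show ?thesis
  proof (cases "b \<in> C")
    case True
    have "connected_on (insert w C) {e\<in>E. e \<subseteq> insert w C}" using conn_insert[OF f'(2) True wb] .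
    moreover have "insert w W - insert w C = W - C" using w by auto
    ultimately show ?thesis using True f' w unfolding flip_def by auto
  next
    case False
    have "b \<in> W - C" using b False by simp
    from conn_insert[OF f'(3) this wb]
    have "connected_on (insert w (W - C)) {e\<in>E. e \<subseteq> insert w (W - C)}" .
    moreover have "insert w (W - C) = insert w W - C" using w f'(1) by auto
    ultimately show ?thesis using False f' w unfolding flip_def by auto
  qed
qed

lemma sdl_map:
  assumes "\<forall>C\<in>set Cs. L C \<inter> W = C \<and> L C \<subseteq> W'"
  shows "sdl (map L Cs) \<inter> W = sdl Cs \<and> sdl (map L Cs) \<subseteq> W'"
  using assms
proof (induction Cs)
  case Nil then show ?case by simp
next
  case (Cons C Cs)
  then have h: "sdl (map L Cs) \<inter> W = sdl Cs" "sdl (map L Cs) \<subseteq> W'" "L C \<inter> W = C" "L C \<subseteq> W'" by auto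
  have "sd (L C) (sdl (map L Cs)) \<inter> W = sd C (sdl Cs)"
    using h(1,3) unfolding sd_def by blast
  moreover have "sd (L C) (sdl (map L Cs)) \<subseteq> W'" using h(2,4) unfolding sd_def by blast
  ultimately show ?case by simp
qed

lemma sdl_sub: "\<forall>C\<in>set Cs. C \<subseteq> W \<Longrightarrow> sdl Cs \<subseteq> W"
  by (induction Cs) (auto simp: sd_def)

lemma good_step:
  assumes g: "good E W" and cW: "connected_on W {e\<in>E. e \<subseteq> W}" and w: "w \<notin> W" and b: "b \<in> W"
    and wb: "{w, b} \<in> E" and fin: "finite W"
  shows "good E (insert w W)"
  unfolding good_def
proof (intro allI impI)
  fix U assume U: "U \<subseteq> insert w W"
  let ?W' = "insert w W"
  obtain Cs where Cs: "length Cs + 1 \<le> card W" "\<forall>C\<in>set Cs. flip E W C" "sdl Cs = U \<inter> W \<or> sdl Cs = W - U \<inter> W"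
    using g unfolding good_def by (meson inf_le2)
  define L where "L C = (if b \<in> C then insert w C else C)" for C
  have Lp: "flip E ?W' (L C) \<and> L C \<inter> W = C" if "C \<in> set Cs" for C
    unfolding L_def using lift[OF _ w b wb] Cs(2) that by blast
  have Lsub: "L C \<subseteq> ?W'" if "C \<in> set Cs" for C using Lp[OF that] unfolding flip_def by blast
  have sm: "sdl (map L Cs) \<inter> W = sdl Cs \<and> sdl (map L Cs) \<subseteq> ?W'"
    by (rule sdl_map) (use Lp Lsub in blast)
  define D' where "D' = sdl (map L Cs)"
  define tgt where "tgt = (if sdl Cs = U \<inter> W then U else ?W' - U)"
  have tgtW: "D' \<inter> W = tgt \<inter> W" using sm Cs(3) unfolding D'_def tgt_def by auto
  have D'sub: "D' \<subseteq> ?W'" using sm unfolding D'_def by blast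
  have tsub: "tgt \<subseteq> ?W'" unfolding tgt_def using U by auto
  have fl': "\<forall>C\<in>set (map L Cs). flip E ?W' C" using Lp by auto
  have flw: "flip E ?W' {w}"
  proof -
    have "?W' - {w} = W" using w by auto
    then show ?thesis unfolding flip_def using cW conn_single by auto
  qed
  have cardW': "card ?W' = card W + 1" using w fin by simp
  have res: "tgt = U \<or> tgt = ?W' - U" unfolding tgt_def by auto
  show "\<exists>Cs. length Cs + 1 \<le> card ?W' \<and> (\<forall>C\<in>set Cs. flip E ?W' C) \<and> (sdl Cs = U \<or> sdl Cs = ?W' - U)"
  proof (cases "(w \<in> D') = (w \<in> tgt)")
    case True
    have "D' = tgt"
    proof (rule set_eqI)
      fix x show "x \<in> D' \<longleftrightarrow> x \<in> tgt"
        using tgtW D'sub tsub True by (cases "x = w"; cases "x \<in> W") blast+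
    qed
    then show ?thesis using res fl' Cs(1) cardW' unfolding D'_def
      by (intro exI[of _ "map L Cs"]) auto
  next
    case False
    have "sd {w} D' = tgt"
    proof (rule set_eqI)
      fix x show "x \<in> sd {w} D' \<longleftrightarrow> x \<in> tgt"
        using tgtW D'sub tsub False w unfolding sd_mem by (cases "x = w"; cases "x \<in> W") blast+
    qed
    then show ?thesis using res fl' flw Cs(1) cardW' unfolding D'_def
      by (intro exI[of _ "{w} # map L Cs"]) auto
  qed
qed

lemma good_V:
  fixes V :: "'v set"
  assumes sg: "simple_graph V E" and cV: "connected_on V E" and ne: "V \<noteq> {}"
  shows "good E V"
proof -
  have finV: "finite V" using sg_facts(1)[OF sg] .
  have EV: "\<forall>e\<in>E. e \<subseteq> V" using sg_facts(3)[OF sg] .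
  have "\<exists>W \<subseteq> V. card W = k + 1 \<and> connected_on W {e\<in>E. e \<subseteq> W} \<and> good E W" if "k + 1 \<le> card V" for k
    using that
  proof (induction k)
    case 0
    obtain r where r: "r \<in> V" using ne by blast
    have "good E {r}" unfolding good_def
    proof (intro allI impI)
      fix U assume "U \<subseteq> {r}"
      then have "U = {} \<or> U = {r}" by blast
      then show "\<exists>Cs. length Cs + 1 \<le> card {r} \<and> (\<forall>C\<in>set Cs. flip E {r} C) \<and> (sdl Cs = U \<or> sdl Cs = {r} - U)"
        by (intro exI[of _ "[]"]) auto
    qed
    then show ?case using r conn_single by (intro exI[of _ "{r}"]) auto
  next
    case (Suc k)
    then obtain W where W: "W \<subseteq> V" "card W = k + 1" "connected_on W {e\<in>E. e \<subseteq> W}" "good E W" by auto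
    have finW: "finite W" using W(1) finV by (rule finite_subset)
    have "W \<noteq> V" using W(2) Suc.prems by auto
    then obtain y where y: "y \<in> V" "y \<notin> W" using W(1) by blast
    have "W \<noteq> {}" using W(2) by auto
    then obtain x where x: "x \<in> W" by blast
    have "(rel E)\<^sup>*\<^sup>* x y" using conn_get[OF cV _ y(1)] x W(1) by blast
    from cross_edge[OF this x y(2)] obtain b w where bw: "{b, w} \<in> E" "b \<in> W" "w \<notin> W" by blast
    have wV: "w \<in> V" using EV bw(1) by blast
    have wb: "{w, b} \<in> E" using bw(1) by (simp add: insert_commute)
    have "good E (insert w W)" by (rule good_step[OF W(4) W(3) bw(3) bw(2) wb finW])
    moreover have "connected_on (insert w W) {e\<in>E. e \<subseteq> insert w W}" by (rule conn_insert[OF W(3) bw(2) wb])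
    moreover have "card (insert w W) = Suc k + 1" using W(2) bw(3) finW by simp
    moreover have "insert w W \<subseteq> V" using W(1) wV by simp
    ultimately show ?case by blast
  qed
  moreover have "card V - 1 + 1 \<le> card V" using ne finV by (simp add: card_gt_0_iff)
  ultimately obtain W where W: "W \<subseteq> V" "card W = card V - 1 + 1" "good E W" by blast
  have "card W = card V" using W(2) ne finV by (simp add: card_gt_0_iff)
  then have "W = V" using W(1) finV by (simp add: card_subset_eq)
  then show ?thesis using W(3) by simp
qed

lemma path_flips:
  fixes V :: "'v::finite set"
  assumes sg: "simple_graph V E"
  shows "\<forall>C\<in>set Cs. flip E V C \<Longrightarrow> S \<subseteq> V \<Longrightarrow>
    \<exists>m \<le> length Cs. (skel_adj (cut_polytope V E) ^^ m) (cut_vec E S) (cut_vec E (sd S (sdl Cs)))"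
proof (induction Cs arbitrary: S)
  case Nil
  have "sd S {} = S" unfolding sd_def by simp
  then show ?case by (intro exI[of _ 0]) simp
next
  case (Cons C Cs)
  have fC: "C \<subseteq> V" "connected_on C {e\<in>E. e \<subseteq> C}" "connected_on (V - C) {e\<in>E. e \<subseteq> V - C}"
    using Cons.prems(1) unfolding flip_def by auto
  have S'V: "sd S C \<subseteq> V" using Cons.prems(2) fC(1) unfolding sd_def by auto
  obtain m where m: "m \<le> length Cs"
    "(skel_adj (cut_polytope V E) ^^ m) (cut_vec E (sd S C)) (cut_vec E (sd (sd S C) (sdl Cs)))"
    using Cons.IH[OF _ S'V] Cons.prems(1) by auto
  have assoc: "sd (sd S C) (sdl Cs) = sd S (sdl (C # Cs))" unfolding sdl.simps sd_def by auto
  show ?case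
  proof (cases "cut_vec E S = cut_vec E (sd S C)")
    case True
    then show ?thesis using m assoc by (intro exI[of _ m]) auto
  next
    case False
    have "skel_adj (cut_polytope V E) (cut_vec E S) (cut_vec E (sd S C))"
      by (rule adj_suff[OF sg Cons.prems(2) fC False])
    from relpowp_Suc_I2[OF this m(2)] show ?thesis using m(1) assoc by (intro exI[of _ "Suc m"]) auto
  qed
qed

lemma upper_path:
  fixes V :: "'v::finite set"
  assumes sg: "simple_graph V E" and cV: "connected_on V E" and ne: "V \<noteq> {}"
    and x: "x \<in> {cut_vec E S | S. S \<subseteq> V}" and y: "y \<in> {cut_vec E S | S. S \<subseteq> V}"
  shows "\<exists>m \<le> card V - 1. (skel_adj (cut_polytope V E) ^^ m) x y"
proof -
  obtain S T where ST: "x = cut_vec E S" "S \<subseteq> V" "y = cut_vec E T" "T \<subseteq> V" using x y by blast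
  have UV: "sd S T \<subseteq> V" using ST unfolding sd_def by auto
  obtain Cs where Cs: "length Cs + 1 \<le> card V" "\<forall>C\<in>set Cs. flip E V C" "sdl Cs = sd S T \<or> sdl Cs = V - sd S T"
    using good_V[OF sg cV ne] UV unfolding good_def by blast
  obtain m where m: "m \<le> length Cs"
    "(skel_adj (cut_polytope V E) ^^ m) (cut_vec E S) (cut_vec E (sd S (sdl Cs)))"
    using path_flips[OF sg Cs(2) ST(2)] by blast
  have "cut_vec E (sd S (sdl Cs)) = cut_vec E T"
  proof (cases "sdl Cs = sd S T")
    case True
    then show ?thesis by (simp add: sd_sd)
  next
    case False
    then have eq: "sdl Cs = V - sd S T" using Cs(3) by simp
    show ?thesis unfolding eq by (rule cv_eq[OF sg]) (use ST in \<open>auto simp: sd_mem\<close>)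
  qed
  then show ?thesis using m Cs(1) ST by (intro exI[of _ m]) auto
qed

theorem theorem6:
  fixes V :: "'v::finite set" and E :: "'v set set"
  assumes "almost_tree 2 V E"
  shows "card V div 3 \<le> skel_diameter (cut_polytope V E) \<and>
         skel_diameter (cut_polytope V E) \<le> card V - 1"
proof -
  note at = assms
  have cg: "connected_graph V E" using at unfolding almost_tree_def by auto
  then have sg: "simple_graph V E" and ne: "V \<noteq> {}" and cV: "connected_on V E"
    unfolding connected_graph_def by auto
  note sgf = sg_facts[OF sg]
  let ?P = "cut_polytope V E"
  let ?C = "{cut_vec E S | S. S \<subseteq> V}"
  let ?D = "{skel_dist ?P x y | x y. x \<in> skel_vertices ?P \<and> y \<in> skel_vertices ?P}"
  have Deq: "?D = (\<lambda>(x, y). skel_dist ?P x y) ` (?C \<times> ?C)" unfolding verts by auto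
  have finD: "finite ?D" unfolding Deq using C_finite[OF sgf(1)] by simp
  have dist_le: "skel_dist ?P x y \<le> card V - 1" if xC: "x \<in> ?C" and yC: "y \<in> ?C" for x y
  proof -
    obtain m where m: "m \<le> card V - 1" "(skel_adj ?P ^^ m) x y" using upper_path[OF sg cV ne xC yC] by blast
    have "skel_dist ?P x y \<le> m" unfolding skel_dist_def using m(2) by (rule Least_le)
    then show ?thesis using m(1) by simp
  qed
  obtain r where r: "r \<in> V" using ne by blast
  obtain M where M: "card V - 1 \<le> card {e\<in>E. card (e \<inter> M) = 1}"
    using big_cut[OF sgf(1) r cV sgf(3) sgf(2)] by blast
  define M' where "M' = M \<inter> V"
  have eqM: "{e\<in>E. card (e \<inter> M) = 1} = {e\<in>E. card (e \<inter> M') = 1}"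
  proof (intro Collect_cong conj_cong refl)
    fix e assume "e \<in> E"
    then have "e \<subseteq> V" using sgf(3) by blast
    then have "e \<inter> M' = e \<inter> M" unfolding M'_def by blast
    then show "(card (e \<inter> M) = 1) = (card (e \<inter> M') = 1)" by simp
  qed
  let ?x0 = "cut_vec E {}" and ?y0 = "cut_vec E M'"
  have x0C: "?x0 \<in> ?C" by blast
  have y0C: "?y0 \<in> ?C" unfolding M'_def by blast
  have wx0: "wt E ?x0 = 0" unfolding wt_def by (simp add: cv_nth)
  have wy0: "wt E ?y0 = card {e\<in>E. card (e \<inter> M') = 1}" unfolding wt_def
    by (rule arg_cong[where f = card]) (auto simp: cv_nth)
  define L where "L = skel_dist ?P ?x0 ?y0"
  have ex: "\<exists>n. (skel_adj ?P ^^ n) ?x0 ?y0" using upper_path[OF sg cV ne x0C y0C] by blast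
  have pathL: "(skel_adj ?P ^^ L) ?x0 ?y0" unfolding L_def skel_dist_def using ex by (rule LeastI_ex)
  have "wt E ?y0 \<le> wt E ?x0 + 3 * L" using walk_wt[OF at pathL x0C] by blast
  then have "card V - 1 \<le> 3 * L" using wx0 wy0 M eqM by simp
  then have lowL: "card V div 3 \<le> L" by linarith
  have x0v: "?x0 \<in> skel_vertices ?P" and y0v: "?y0 \<in> skel_vertices ?P" using x0C y0C verts by auto
  have LD: "L \<in> ?D" unfolding L_def using x0v y0v by blast
  have "L \<le> skel_diameter ?P" unfolding skel_diameter_def using finD LD by (rule Max_ge)
  moreover have "skel_diameter ?P \<le> card V - 1"
    unfolding skel_diameter_def
  proof (rule Max.boundedI[OF finD])
    show "?D \<noteq> {}" using LD by blast
    fix d assume "d \<in> ?D"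
    then obtain x y where "d = skel_dist ?P x y" "x \<in> ?C" "y \<in> ?C" unfolding verts by blast
    then show "d \<le> card V - 1" using dist_le by simp
  qed
  ultimately show ?thesis using lowL by linarith
qed

end
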